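(* Let $\mathcal{T}=(V,A,E,f,q,v_0)$ be a decorated pseudo-rooted tree and let $\mathscr{P}$ be a partition of $A\setminus A_0$. Then (a) $M(\mathcal{T})=\sum_{\alpha\in A\setminus A_0}M(\mathcal{T}_\alpha)+\sum_{\alpha\in A\setminus A_0}\mathfrak{M}(\mathcal{T},\{\alpha\})-I(A\setminus A_0,A\setminus A_0)$; (b) $M(\mathcal{T})=\sum_{X\in\mathscr{P}}M(\mathcal{T}_X)+\sum_{X\in\mathscr{P}}\mathfrak{M}(\mathcal{T},X)-\sum_{(X,Y)\in\mathscr{P}^2,\,X\neq Y}I(X,Y)$.
   Context: A graph is a pair $(X_0,X_1)$ of finite sets such that each element of $X_1$ (an edge) is a $2$-element subset of $X_0$; elements of $X_0$ are called cells. The valency $\delta_x$ of a cell $x$ is the number of edges containing $x$. A path is a tuple $(x_0,\dots,x_n)$ ($n\ge 0$) of cells such that $\{x_i,x_{i+1}\}$ is an edge for each $i<n$ and these edges are pairwise distinct; a cell (resp. edge) is in the path if it is one of the $x_i$ (resp. one of the $\{x_i,x_{i+1}\}$). The graph is a tree if for any cells $x,y$ there is a unique path from $x$ to $y$, denoted $\gamma_{x,y}$. A decorated tree is a $5$-tuple $(V,A,E,f,q)$ where $V$ (vertices) and $A$ (arrows) are finite disjoint sets, $(V\cup A,E)$ is a tree, every arrow has valency $1$, $f:A\to\mathbb{Z}$, $q$ assigns an integer $q(e,x)$ to each pair $(e,x)$ with $e\in E$, $x\in e$, such that $q(e,\alpha)=1$ whenever $\alpha\in A$, and for every $v\in V$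 and distinct edges $e,e'$ containing $v$, $\gcd(q(e,v),q(e',v))=1$. Let $A_0=\{\alpha\in A: f(\alpha)=0\}$. For $x\in V\cup A$ and an edge $e\ni x$, $Q(e,x)=\prod q(e',x)$ over edges $e'\neq e$ containing $x$ (empty products equal $1$). An edge $\varepsilon$ is incident to a path $\gamma$ if $\varepsilon$ is not in $\gamma$ but contains some cell $u$ of $\gamma$; then $q(\varepsilon,\gamma):=q(\varepsilon,u)$. For $v\in V\cup A$, $\alpha\in A$, $v\ne\alpha$: $x_{v,\alpha}=f(\alpha)\prod_\varepsilon q(\varepsilon,\gamma_{v,\alpha})$ over all edges $\varepsilon$ incident to $\gamma_{v,\alpha}$. For $v\in V\cup A_0$, $N_v=\sum_{\alpha\in A\setminus A_0}x_{v,\alpha}$, and $M(\mathcal{T})=-\sum_{v\in V\cup A_0}N_v(\delta_v-2)$. For a path $\gamma=(x_0,\dots,x_n)$ with $n>0$ and a cell $u$ of $\gamma$, $Q(\gamma,u)=\prod q(\varepsilon,u)$ over edges $\varepsilon$ containing $u$ and not in $\gamma$, and $Q^*(\gamma)=\prod_{0<i<n}Q(\gamma,x_i)$. For $X,Y\subseteq A\setminus A_0$, $I(X,Y)=\sum_{(\alpha,\beta)\in X\times Y,\ \alpha\ne\beta}Q^*(\gamma_{\alpha,\beta})f(\alpha)f(\beta)$. For $X\subseteq A\setminus A_0$, with $X^c=(A\setminus A_0)\setminus X$, $\mathfrak{M}(\mathcal{T},X)=\sum_{\alpha\in X}\big(1-\tfrac{1}{f(\alpha)}\big)I(\{\alpha\},X^c)$.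 A pseudo-root of $(V,A,E,f,q)$ is a vertex $v_0$ such that $q(e,v_0)=1$ for all edges $e$ containing $v_0$, and for every $v\in V\setminus\{v_0\}$ at most one edge $e$ containing $v$ and not in $\gamma_{v_0,v}$ satisfies $q(e,v)\ne1$. A decorated pseudo-rooted tree is $(V,A,E,f,q,v_0)$ with $(V,A,E,f,q)$ a decorated tree and $v_0$ a pseudo-root; $M$ etc. are those of $(V,A,E,f,q)$. For nonempty $X\subseteq A\setminus A_0$, $\mathcal{T}_X$ is defined as follows. Let $\mathcal{T}'_X$ have arrow set $X$, vertex set the vertices of $\mathcal{T}$ lying on $\gamma_{v_0,\alpha}$ for some $\alpha\in X$, edge set the edges of $\mathcal{T}$ lying in $\gamma_{v_0,\alpha}$ for some $\alpha\in X$, with decorations as in $\mathcal{T}$. For each vertex $v$ of $\mathcal{T}'_X$ let $b_v=\prod q(e,v)$ over edges $e$ of $\mathcal{T}$ containing $v$ that are not edges of $\mathcal{T}'_X$. For each such $v$ with $b_v\ne1$, add a new arrow $\alpha_v$ with $f(\alpha_v)=0$ and an edge $\{v,\alpha_v\}$ decorated $b_v$ near $v$ and $1$ near $\alpha_v$. The result, with pseudo-root $v_0$, is $\mathcal{T}_X$; and $\mathcal{T}_\alpha:=\mathcal{T}_{\{\alpha\}}$. Partitions consist of nonempty sets. *)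

theory Defs
  imports Complex_Main "HOL-Library.Disjoint_Sets"
begin

definition graph :: "'a set \<Rightarrow> 'a set set \<Rightarrow> bool" where
  "graph X0 X1 \<longleftrightarrow> finite X0 \<and> (\<forall>e\<in>X1. e \<subseteq> X0 \<and> card e = 2)"

definition valency :: "'a set set \<Rightarrow> 'a \<Rightarrow> nat" where
  "valency X1 x = card {e\<in>X1. x \<in> e}"

definition is_path :: "'a set \<Rightarrow> 'a set set \<Rightarrow> 'a list \<Rightarrow> bool" where
  "is_path X0 X1 p \<longleftrightarrow> p \<noteq> [] \<and> set p \<subseteq> X0 \<and>
     (\<forall>i. Suc i < length p \<longrightarrow> {p ! i, p ! Suc i} \<in> X1) \<and>
     distinct (map (\<lambda>i. {p ! i, p ! Suc i}) [0..<length p - 1])"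

definition path_edges :: "'a list \<Rightarrow> 'a set set" where
  "path_edges p = {{p ! i, p ! Suc i} | i. Suc i < length p}"

definition tree :: "'a set \<Rightarrow> 'a set set \<Rightarrow> bool" where
  "tree X0 X1 \<longleftrightarrow> graph X0 X1 \<and>
     (\<forall>x\<in>X0. \<forall>y\<in>X0. \<exists>!p. is_path X0 X1 p \<and> hd p = x \<and> last p = y)"

definition gamma :: "'a set \<Rightarrow> 'a set set \<Rightarrow> 'a \<Rightarrow> 'a \<Rightarrow> 'a list" where
  "gamma X0 X1 x y = (THE p. is_path X0 X1 p \<and> hd p = x \<and> last p = y)"

text \<open>A decorated tree is given by V, A, E, f, q; f is only relevant on A and q only on
  pairs (e,x) with e in E and x in e.\<close>
definition dtree :: "'a set \<Rightarrow> 'a set \<Rightarrow> 'a set set \<Rightarrow> ('a \<Rightarrow> int) \<Rightarrow> ('a set \<Rightarrow> 'a \<Rightarrow> int) \<Rightarrow> bool" where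
  "dtree V A E f q \<longleftrightarrow> finite V \<and> finite A \<and> V \<inter> A = {} \<and> tree (V \<union> A) E \<and>
     (\<forall>\<alpha>\<in>A. valency E \<alpha> = 1) \<and>
     (\<forall>e\<in>E. \<forall>\<alpha>\<in>A. \<alpha> \<in> e \<longrightarrow> q e \<alpha> = 1) \<and>
     (\<forall>v\<in>V. \<forall>e\<in>E. \<forall>e'\<in>E. v \<in> e \<and> v \<in> e' \<and> e \<noteq> e' \<longrightarrow> gcd (q e v) (q e' v) = 1)"

definition A0 :: "'a set \<Rightarrow> ('a \<Rightarrow> int) \<Rightarrow> 'a set" where
  "A0 A f = {\<alpha>\<in>A. f \<alpha> = 0}"

definition incident :: "'a set set \<Rightarrow> 'a list \<Rightarrow> 'a set set" where
  "incident E \<gamma> = {\<epsilon>\<in>E. \<epsilon> \<notin> path_edges \<gamma> \<and> (\<exists>u\<in>set \<gamma>. u \<in> \<epsilon>)}"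

text \<open>q(eps, gamma) := q(eps, u) for the cell u of gamma lying in eps (unique in a tree).\<close>
definition q_path :: "('a set \<Rightarrow> 'a \<Rightarrow> int) \<Rightarrow> 'a set \<Rightarrow> 'a list \<Rightarrow> int" where
  "q_path q \<epsilon> \<gamma> = q \<epsilon> (SOME u. u \<in> set \<gamma> \<and> u \<in> \<epsilon>)"

definition xva :: "'a set \<Rightarrow> 'a set \<Rightarrow> 'a set set \<Rightarrow> ('a \<Rightarrow> int) \<Rightarrow> ('a set \<Rightarrow> 'a \<Rightarrow> int) \<Rightarrow> 'a \<Rightarrow> 'a \<Rightarrow> int" where
  "xva V A E f q v \<alpha> =
     f \<alpha> * (\<Prod>\<epsilon>\<in>incident E (gamma (V \<union> A) E v \<alpha>). q_path q \<epsilon> (gamma (V \<union> A) E v \<alpha>))"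

definition Nv :: "'a set \<Rightarrow> 'a set \<Rightarrow> 'a set set \<Rightarrow> ('a \<Rightarrow> int) \<Rightarrow> ('a set \<Rightarrow> 'a \<Rightarrow> int) \<Rightarrow> 'a \<Rightarrow> int" where
  "Nv V A E f q v = (\<Sum>\<alpha>\<in>A - A0 A f. xva V A E f q v \<alpha>)"

definition MT :: "'a set \<Rightarrow> 'a set \<Rightarrow> 'a set set \<Rightarrow> ('a \<Rightarrow> int) \<Rightarrow> ('a set \<Rightarrow> 'a \<Rightarrow> int) \<Rightarrow> int" where
  "MT V A E f q = - (\<Sum>v\<in>V \<union> A0 A f. Nv V A E f q v * (int (valency E v) - 2))"

definition Qpath :: "'a set set \<Rightarrow> ('a set \<Rightarrow> 'a \<Rightarrow> int) \<Rightarrow> 'a list \<Rightarrow> 'a \<Rightarrow> int" where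
  "Qpath E q \<gamma> u = (\<Prod>\<epsilon>\<in>{\<epsilon>\<in>E. u \<in> \<epsilon> \<and> \<epsilon> \<notin> path_edges \<gamma>}. q \<epsilon> u)"

definition Qstar :: "'a set set \<Rightarrow> ('a set \<Rightarrow> 'a \<Rightarrow> int) \<Rightarrow> 'a list \<Rightarrow> int" where
  "Qstar E q \<gamma> = (\<Prod>i\<in>{1..<length \<gamma> - 1}. Qpath E q \<gamma> (\<gamma> ! i))"

definition II :: "'a set \<Rightarrow> 'a set \<Rightarrow> 'a set set \<Rightarrow> ('a \<Rightarrow> int) \<Rightarrow> ('a set \<Rightarrow> 'a \<Rightarrow> int) \<Rightarrow> 'a set \<Rightarrow> 'a set \<Rightarrow> int" where
  "II V A E f q X Y = (\<Sum>p\<in>{(\<alpha>, \<beta>) \<in> X \<times> Y. \<alpha> \<noteq> \<beta>}.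
      Qstar E q (gamma (V \<union> A) E (fst p) (snd p)) * f (fst p) * f (snd p))"

definition frakM :: "'a set \<Rightarrow> 'a set \<Rightarrow> 'a set set \<Rightarrow> ('a \<Rightarrow> int) \<Rightarrow> ('a set \<Rightarrow> 'a \<Rightarrow> int) \<Rightarrow> 'a set \<Rightarrow> real" where
  "frakM V A E f q X = (\<Sum>\<alpha>\<in>X. (1 - 1 / real_of_int (f \<alpha>)) *
       real_of_int (II V A E f q {\<alpha>} ((A - A0 A f) - X)))"

definition pseudo_root :: "'a set \<Rightarrow> 'a set \<Rightarrow> 'a set set \<Rightarrow> ('a set \<Rightarrow> 'a \<Rightarrow> int) \<Rightarrow> 'a \<Rightarrow> bool" where
  "pseudo_root V A E q v0 \<longleftrightarrow> v0 \<in> V \<and> (\<forall>e\<in>E. v0 \<in> e \<longrightarrow> q e v0 = 1) \<and>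
     (\<forall>v\<in>V - {v0}. card {e\<in>E. v \<in> e \<and> e \<notin> path_edges (gamma (V \<union> A) E v0 v) \<and> q e v \<noteq> 1} \<le> 1)"

definition dptree :: "'a set \<Rightarrow> 'a set \<Rightarrow> 'a set set \<Rightarrow> ('a \<Rightarrow> int) \<Rightarrow> ('a set \<Rightarrow> 'a \<Rightarrow> int) \<Rightarrow> 'a \<Rightarrow> bool" where
  "dptree V A E f q v0 \<longleftrightarrow> dtree V A E f q \<and> pseudo_root V A E q v0"

text \<open>Cells of T_X live in the sum type: Inl c is the old cell c, Inr v is the new arrow alpha_v.\<close>

definition subV :: "'a set \<Rightarrow> 'a set \<Rightarrow> 'a set set \<Rightarrow> 'a \<Rightarrow> 'a set \<Rightarrow> 'a set" where
  "subV V A E v0 X = {v\<in>V. \<exists>\<alpha>\<in>X. v \<in> set (gamma (V \<union> A) E v0 \<alpha>)}"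

definition subE :: "'a set \<Rightarrow> 'a set \<Rightarrow> 'a set set \<Rightarrow> 'a \<Rightarrow> 'a set \<Rightarrow> 'a set set" where
  "subE V A E v0 X = (\<Union>\<alpha>\<in>X. path_edges (gamma (V \<union> A) E v0 \<alpha>))"

definition bv :: "'a set \<Rightarrow> 'a set \<Rightarrow> 'a set set \<Rightarrow> ('a set \<Rightarrow> 'a \<Rightarrow> int) \<Rightarrow> 'a \<Rightarrow> 'a set \<Rightarrow> 'a \<Rightarrow> int" where
  "bv V A E q v0 X v = (\<Prod>e\<in>{e\<in>E. v \<in> e \<and> e \<notin> subE V A E v0 X}. q e v)"

definition newv :: "'a set \<Rightarrow> 'a set \<Rightarrow> 'a set set \<Rightarrow> ('a set \<Rightarrow> 'a \<Rightarrow> int) \<Rightarrow> 'a \<Rightarrow> 'a set \<Rightarrow> 'a set" where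
  "newv V A E q v0 X = {v\<in>subV V A E v0 X. bv V A E q v0 X v \<noteq> 1}"

definition TX_V :: "'a set \<Rightarrow> 'a set \<Rightarrow> 'a set set \<Rightarrow> 'a \<Rightarrow> 'a set \<Rightarrow> ('a + 'a) set" where
  "TX_V V A E v0 X = Inl ` subV V A E v0 X"

definition TX_A :: "'a set \<Rightarrow> 'a set \<Rightarrow> 'a set set \<Rightarrow> ('a set \<Rightarrow> 'a \<Rightarrow> int) \<Rightarrow> 'a \<Rightarrow> 'a set \<Rightarrow> ('a + 'a) set" where
  "TX_A V A E q v0 X = Inl ` X \<union> Inr ` newv V A E q v0 X"

definition TX_E :: "'a set \<Rightarrow> 'a set \<Rightarrow> 'a set set \<Rightarrow> ('a set \<Rightarrow> 'a \<Rightarrow> int) \<Rightarrow> 'a \<Rightarrow> 'a set \<Rightarrow> ('a + 'a) set set" where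
  "TX_E V A E q v0 X = (\<lambda>e. Inl ` e) ` subE V A E v0 X \<union> (\<lambda>v. {Inl v, Inr v}) ` newv V A E q v0 X"

definition TX_f :: "('a \<Rightarrow> int) \<Rightarrow> ('a + 'a) \<Rightarrow> int" where
  "TX_f f = case_sum f (\<lambda>_. 0)"

definition TX_q :: "'a set \<Rightarrow> 'a set \<Rightarrow> 'a set set \<Rightarrow> ('a set \<Rightarrow> 'a \<Rightarrow> int) \<Rightarrow> 'a \<Rightarrow> 'a set \<Rightarrow> ('a + 'a) set \<Rightarrow> ('a + 'a) \<Rightarrow> int" where
  "TX_q V A E q v0 X e x = (case x of
      Inl y \<Rightarrow> (if Inr y \<in> e then bv V A E q v0 X y else q {z. Inl z \<in> e} y)
    | Inr _ \<Rightarrow> 1)"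

definition MX :: "'a set \<Rightarrow> 'a set \<Rightarrow> 'a set set \<Rightarrow> ('a \<Rightarrow> int) \<Rightarrow> ('a set \<Rightarrow> 'a \<Rightarrow> int) \<Rightarrow> 'a \<Rightarrow> 'a set \<Rightarrow> int" where
  "MX V A E f q v0 X = MT (TX_V V A E v0 X) (TX_A V A E q v0 X) (TX_E V A E q v0 X)
        (TX_f f) (TX_q V A E q v0 X)"

end

theory Submission
  imports Defs
begin


fun el :: "'a list \<Rightarrow> 'a set list" where
  "el (x # y # r) = {x,y} # el (y # r)" | "el _ = []"

lemma el_len: "length (el p) = length p - 1"
  by (induction p rule: el.induct) auto

lemma el_nth: "i < length p - 1 \<Longrightarrow> el p ! i = {p!i, p!Suc i}"
proof (induction p arbitrary: i rule: el.induct)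
  case (1 x y r) then show ?case by (cases i) auto
qed auto

lemma el_map: "map (\<lambda>i. {p ! i, p ! Suc i}) [0..<length p - 1] = el p"
  by (rule nth_equalityI) (auto simp: el_len el_nth)

lemma pe_el: "path_edges p = set (el p)"
proof -
  have "path_edges p = (\<lambda>i. {p ! i, p ! Suc i}) ` {i. Suc i < length p}"
    unfolding path_edges_def by auto
  also have "\<dots> = set (map (\<lambda>i. {p ! i, p ! Suc i}) [0..<length p - 1])"
    by (auto simp: image_iff)
  finally show ?thesis by (simp only: el_map)
qed

lemma is_path_el: "is_path C E p \<longleftrightarrow> p \<noteq> [] \<and> set p \<subseteq> C \<and> set (el p) \<subseteq> E \<and> distinct (el p)"
proof -
  have "(\<forall>i. Suc i < length p \<longrightarrow> {p ! i, p ! Suc i} \<in> E) \<longleftrightarrow> set (el p) \<subseteq> E"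
    unfolding pe_el[symmetric] path_edges_def by auto
  then show ?thesis unfolding is_path_def el_map by auto
qed

lemma el_Cons: "p \<noteq> [] \<Longrightarrow> el (x # p) = {x, hd p} # el p"
  by (cases p) auto

lemma el_append: "el (xs @ y # ys) = el (xs @ [y]) @ el (y # ys)"
proof (induction xs)
  case (Cons x xs) then show ?case by (cases xs) auto
qed simp

lemma el_snoc: "xs \<noteq> [] \<Longrightarrow> el (xs @ [x]) = el xs @ [{last xs, x}]"
proof (induction xs rule: el.induct)
  case (1 x y r) then show ?case by auto
qed auto

lemma el_rev: "el (rev p) = rev (el p)"
proof (induction p)
  case (Cons x p)
  then show ?case
    by (cases "p = []") (auto simp: el_snoc el_Cons last_rev insert_commute)
qed simp

lemma el_sub: "e \<in> set (el p) \<Longrightarrow> e \<subseteq> set p"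
  by (induction p rule: el.induct) auto

lemma el_distinct: "distinct p \<Longrightarrow> distinct (el p)"
proof (induction p rule: el.induct)
  case (1 x y r)
  then show ?case using el_sub[of "{x,y}" "y # r"] by auto
qed auto

lemma el_infix: "s \<noteq> [] \<Longrightarrow> el (a @ s @ c) = el (a @ [hd s]) @ el s @ el (last s # c)"
proof -
  assume s: "s \<noteq> []"
  then obtain s' where s': "s = hd s # s'" by (cases s) auto
  obtain s'' where s'': "s = s'' @ [last s]" using s by (metis append_butlast_last_id)
  have "el (s @ c) = el s @ el (last s # c)"
    using el_append[of s'' "last s" c] s'' by (metis append.assoc append_Cons append_Nil)
  moreover have "el (a @ s @ c) = el (a @ [hd s]) @ el (s @ c)"
    using el_append[of a "hd s" "s' @ c"] s' by (metis append_Cons)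
  ultimately show ?thesis by simp
qed

definition walk :: "'a set \<Rightarrow> 'a set set \<Rightarrow> 'a list \<Rightarrow> bool" where
  "walk C E w \<longleftrightarrow> w \<noteq> [] \<and> set w \<subseteq> C \<and> set (el w) \<subseteq> E"

lemma path_walk: "is_path C E p \<Longrightarrow> walk C E p"
  by (simp add: is_path_el walk_def)

lemma distinct_walk_path: "walk C E w \<Longrightarrow> distinct w \<Longrightarrow> is_path C E w"
  by (simp add: is_path_el walk_def el_distinct)

lemma walk_reduce:
  "walk C E w \<Longrightarrow> \<exists>w'. walk C E w' \<and> distinct w' \<and> hd w' = hd w \<and> last w' = last w
      \<and> set w' \<subseteq> set w \<and> set (el w') \<subseteq> set (el w)"
proof (induction "length w" arbitrary: w rule: less_induct)
  case less
  show ?case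
  proof (cases "distinct w")
    case True then show ?thesis using less.prems by blast
  next
    case False
    then obtain xs ys zs y where w: "w = xs @ [y] @ ys @ [y] @ zs" using not_distinct_decomp by blast
    define w1 where "w1 = xs @ y # zs"
    have e1: "el w1 = el (xs @ [y]) @ el (y # zs)" unfolding w1_def by (rule el_append)
    have e2: "el w = el (xs @ [y]) @ el (y # ys @ y # zs)" unfolding w using el_append[of xs y "ys @ y # zs"] by simp
    have e3: "el (y # ys @ y # zs) = el (y # ys @ [y]) @ el (y # zs)"
      using el_append[of "y # ys" y zs] by simp
    have sub: "set (el w1) \<subseteq> set (el w)" using e1 e2 e3 by auto
    have "walk C E w1" using less.prems sub unfolding walk_def by (auto simp: w1_def w)
    moreover have "length w1 < length w" unfolding w1_def w by simp
    ultimately obtain w' where W: "walk C E w' \<and> distinct w' \<and> hd w' = hd w1 \<and> last w' = last w1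
      \<and> set w' \<subseteq> set w1 \<and> set (el w') \<subseteq> set (el w1)" using less.hyps by blast
    moreover have "hd w1 = hd w" unfolding w1_def w by (cases xs) auto
    moreover have "last w1 = last w" unfolding w1_def w by (cases zs) auto
    moreover have "set w1 \<subseteq> set w" unfolding w1_def w by auto
    ultimately show ?thesis using sub W by (intro exI[of _ w']) auto
  qed
qed


locale tr =
  fixes C :: "'a set" and E :: "'a set set"
  assumes T: "tree C E"
begin

lemma fin: "finite C" and edge: "e \<in> E \<Longrightarrow> e \<subseteq> C \<and> card e = 2"
  using T unfolding tree_def graph_def by auto

lemma edge_neq: "{x, y} \<in> E \<Longrightarrow> x \<noteq> y"
  using edge[of "{x,y}"] by auto

lemma finE: "finite E"
proof -
  have "E \<subseteq> Pow C" using edge by auto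
  then show ?thesis using fin by (meson finite_Pow_iff finite_subset)
qed

abbreviation g where "g x y \<equiv> gamma C E x y"

lemma ex1: "x \<in> C \<Longrightarrow> y \<in> C \<Longrightarrow> \<exists>!p. is_path C E p \<and> hd p = x \<and> last p = y"
  using T unfolding tree_def by auto

lemma g_path: "x \<in> C \<Longrightarrow> y \<in> C \<Longrightarrow> is_path C E (g x y) \<and> hd (g x y) = x \<and> last (g x y) = y"
  unfolding gamma_def using theI'[OF ex1] by blast

lemma g_unique: "is_path C E p \<Longrightarrow> hd p = x \<Longrightarrow> last p = y \<Longrightarrow> g x y = p"
proof -
  assume p: "is_path C E p" "hd p = x" "last p = y"
  then have "x \<in> C" "y \<in> C" unfolding is_path_el by auto
  then show ?thesis using p g_path ex1 by blast
qed

lemma g_ne: "x \<in> C \<Longrightarrow> y \<in> C \<Longrightarrow> g x y \<noteq> []"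
  using g_path unfolding is_path_el by auto

lemma g_set: "x \<in> C \<Longrightarrow> y \<in> C \<Longrightarrow> set (g x y) \<subseteq> C"
  using g_path unfolding is_path_el by auto

lemma g_el: "x \<in> C \<Longrightarrow> y \<in> C \<Longrightarrow> set (el (g x y)) \<subseteq> E"
  using g_path unfolding is_path_el by auto

lemma infix_path: "is_path C E (a @ s @ c) \<Longrightarrow> s \<noteq> [] \<Longrightarrow> is_path C E s"
  unfolding is_path_el using el_infix[of s a c] by auto

lemma path_distinct: "is_path C E p \<Longrightarrow> distinct p"
proof (rule ccontr)
  assume p: "is_path C E p" and nd: "\<not> distinct p"
  then obtain xs ys zs y where w: "p = xs @ [y] @ ys @ [y] @ zs" using not_distinct_decomp by blast
  then have "is_path C E (y # ys @ [y])" using infix_path[of xs "y # ys @ [y]" zs] p by simp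
  then have "g y y = y # ys @ [y]" by (intro g_unique) auto
  moreover have "y \<in> C" using p w unfolding is_path_el by auto
  moreover have "is_path C E [y]" using \<open>y \<in> C\<close> unfolding is_path_el by auto
  then have "g y y = [y]" by (intro g_unique) auto
  ultimately show False by simp
qed

lemma g_distinct: "x \<in> C \<Longrightarrow> y \<in> C \<Longrightarrow> distinct (g x y)"
  using g_path path_distinct by blast

lemma g_same: "x \<in> C \<Longrightarrow> g x x = [x]"
  by (intro g_unique) (auto simp: is_path_el)

lemma g_rev: "x \<in> C \<Longrightarrow> y \<in> C \<Longrightarrow> g y x = rev (g x y)"
proof -
  assume xy: "x \<in> C" "y \<in> C"
  have "is_path C E (rev (g x y))" using g_path[OF xy] unfolding is_path_el
    by (auto simp: el_rev)
  then show ?thesis using g_path[OF xy] by (intro g_unique) (auto simp: hd_rev last_rev)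
qed

lemma walk_g: "walk C E w \<Longrightarrow> set (el (g (hd w) (last w))) \<subseteq> set (el w) \<and> set (g (hd w) (last w)) \<subseteq> set w"
proof -
  assume "walk C E w"
  then obtain w' where w': "walk C E w'" "distinct w'" "hd w' = hd w" "last w' = last w"
    "set w' \<subseteq> set w" "set (el w') \<subseteq> set (el w)" using walk_reduce by blast
  then have "g (hd w) (last w) = w'" using distinct_walk_path by (intro g_unique) auto
  then show ?thesis using w' by simp
qed

lemma g_prefix: "x \<in> C \<Longrightarrow> y \<in> C \<Longrightarrow> g x y = a @ c # b \<Longrightarrow> g x c = a @ [c]"
proof -
  assume xy: "x \<in> C" "y \<in> C" and s: "g x y = a @ c # b"
  have "is_path C E (a @ [c])" using infix_path[of "[]" "a @ [c]" b] g_path[OF xy] s by simp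
  moreover have "hd (a @ [c]) = x" using g_path[OF xy] s by (cases a) auto
  ultimately show ?thesis by (intro g_unique) auto
qed

lemma g_suffix: "x \<in> C \<Longrightarrow> y \<in> C \<Longrightarrow> g x y = a @ c # b \<Longrightarrow> g c y = c # b"
proof -
  assume xy: "x \<in> C" "y \<in> C" and s: "g x y = a @ c # b"
  have "is_path C E (c # b)" using infix_path[of a "c # b" "[]"] g_path[OF xy] s by simp
  moreover have "last (c # b) = y" using g_path[OF xy] s by (metis last_appendR list.distinct(1))
  ultimately show ?thesis by (intro g_unique) auto
qed

lemma edge_g: "{x, y} \<in> E \<Longrightarrow> g x y = [x, y]"
proof -
  assume e: "{x,y} \<in> E"
  then have "x \<in> C" "y \<in> C" "x \<noteq> y" using edge[OF e] edge_neq[OF e] by auto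
  then have "is_path C E [x,y]" using e by (intro distinct_walk_path) (auto simp: walk_def)
  then show ?thesis by (intro g_unique) auto
qed

definition par where "par r v = g v r ! 1"

lemma par1: "r \<in> C \<Longrightarrow> v \<in> C \<Longrightarrow> v \<noteq> r \<Longrightarrow>
   g v r = v # g (par r v) r \<and> par r v \<in> C \<and> {v, par r v} \<in> E \<and> par r v \<noteq> v"
proof -
  assume a: "r \<in> C" "v \<in> C" "v \<noteq> r"
  obtain t where t: "g v r = v # t" using g_path[OF a(2,1)] g_ne[OF a(2,1)] by (cases "g v r") auto
  have tne: "t \<noteq> []" using g_path[OF a(2,1)] t a(3) by auto
  then obtain p t' where pt: "t = p # t'" by (cases t) auto
  have "g p r = t" using g_suffix[OF a(2,1), of "[v]" p t'] t pt by simp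
  moreover have "par r v = p" unfolding par_def t pt by simp
  moreover have "{v, p} \<in> E" using g_el[OF a(2,1)] t pt by auto
  moreover have "p \<in> C" using g_set[OF a(2,1)] t pt by auto
  moreover have "p \<noteq> v" using g_distinct[OF a(2,1)] t pt by auto
  ultimately show ?thesis using t by simp
qed

lemma par3: "r \<in> C \<Longrightarrow> v \<in> C \<Longrightarrow> v \<noteq> r \<Longrightarrow> par r v \<noteq> r \<Longrightarrow> par r (par r v) \<noteq> v"
proof
  assume a: "r \<in> C" "v \<in> C" "v \<noteq> r" "par r v \<noteq> r" and e: "par r (par r v) = v"
  have 1: "g v r = v # g (par r v) r" using par1[OF a(1-3)] by simp
  have "g (par r v) r = par r v # g v r" using par1[OF a(1) _ a(4)] par1[OF a(1-3)] e by simp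
  then have "length (g v r) = length (g v r) + 2" using 1 by simp
  then show False by simp
qed

lemma par2: "r \<in> C \<Longrightarrow> v \<in> C \<Longrightarrow> v \<noteq> r \<Longrightarrow> {v, c} \<in> E \<Longrightarrow> c \<noteq> par r v \<Longrightarrow>
   c \<noteq> r \<and> par r c = v \<and> g c r = c # g v r"
proof -
  assume a: "r \<in> C" "v \<in> C" "v \<noteq> r" "{v, c} \<in> E" "c \<noteq> par r v"
  have cC: "c \<in> C" and cv: "c \<noteq> v" using edge[OF a(4)] edge_neq[OF a(4)] by auto
  have nin: "c \<notin> set (g v r)"
  proof
    assume "c \<in> set (g v r)"
    then obtain xs ys where s: "g v r = xs @ c # ys" by (meson split_list)
    have "g v c = xs @ [c]" using g_prefix[OF a(2,1) s] .
    moreover have "g v c = [v, c]" using edge_g[OF a(4)] .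
    ultimately have "xs = [v]" by simp
    then have "par r v = c" unfolding par_def s by simp
    then show False using a(5) by simp
  qed
  have "walk C E (c # g v r)" using g_path[OF a(2,1)] cC a(4) g_ne[OF a(2,1)]
    unfolding walk_def is_path_el by (auto simp: el_Cons insert_commute)
  moreover have "distinct (c # g v r)" using nin g_distinct[OF a(2,1)] by simp
  ultimately have "is_path C E (c # g v r)" by (rule distinct_walk_path)
  then have "g c r = c # g v r" using g_path[OF a(2,1)] g_ne[OF a(2,1)]
    by (intro g_unique) auto
  moreover have "r \<in> set (g v r)" using g_path[OF a(2,1)] g_ne[OF a(2,1)] by (metis last_in_set)
  ultimately show ?thesis using nin g_path[OF a(2,1)] g_ne[OF a(2,1)] unfolding par_def
    by (cases "g v r") auto
qed

lemma par4: "r \<in> C \<Longrightarrow> v \<in> C \<Longrightarrow> v \<noteq> r \<Longrightarrow> {e \<in> set (el (g v r)). v \<in> e} = {{v, par r v}}"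
proof -
  assume a: "r \<in> C" "v \<in> C" "v \<noteq> r"
  have s: "g v r = v # g (par r v) r" using par1[OF a] by simp
  have d: "v \<notin> set (g (par r v) r)" using g_distinct[OF a(2,1)] s by simp
  have ne: "g (par r v) r \<noteq> []" using s g_path[OF a(2,1)] a(3) by auto
  have h: "hd (g (par r v) r) = par r v" using g_path[of "par r v" r] par1[OF a] a(1) by blast
  have "el (g v r) = {v, par r v} # el (g (par r v) r)" using s el_Cons[OF ne] h by simp
  then show ?thesis using d el_sub by fastforce
qed

end


context tr begin

lemma offpath: "s \<in> C \<Longrightarrow> r \<in> C \<Longrightarrow> v \<in> C \<Longrightarrow> v \<notin> set (g s r) \<Longrightarrow> par r v = par s v"
proof -
  assume sr: "s \<in> C" "r \<in> C"
  have "\<forall>v. length (g v r) = n \<longrightarrow> v \<in> C \<longrightarrow> v \<notin> set (g s r) \<longrightarrow> par r v = par s v" for n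
  proof (induction n rule: less_induct)
    case (less n)
    show ?case
    proof (intro allI impI, rule ccontr)
      fix v assume v: "length (g v r) = n" "v \<in> C" "v \<notin> set (g s r)" "par r v \<noteq> par s v"
      have rin: "r \<in> set (g s r)" "s \<in> set (g s r)" using g_path[OF sr] g_ne[OF sr]
        by (metis last_in_set, metis hd_in_set)
      then have vr: "v \<noteq> r" "v \<noteq> s" using v(3) by auto
      define a where "a = par r v"
      have A: "g v r = v # g a r" "a \<in> C" "{v, a} \<in> E" using par1[OF sr(2) v(2) vr(1)] a_def by auto
      have B: "a \<noteq> s \<and> par s a = v \<and> g a s = a # g v s"
        using par2[OF sr(1) v(2) vr(2) A(3)] v(4) a_def by auto
      show False
      proof (cases "a \<in> set (g s r)")
        case True
        then obtain xs ys where s: "g s r = xs @ a # ys" by (meson split_list)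
        have "g s a = xs @ [a]" using g_prefix[OF sr s] .
        then have "g a s = a # rev xs" using g_rev[OF sr(1) A(2)] by simp
        then have "g v s = rev xs" using B by simp
        then have "v \<in> set xs" using g_path[OF v(2) sr(1)] g_ne[OF v(2) sr(1)]
          by (metis hd_in_set set_rev)
        then show False using v(3) s by simp
      next
        case False
        have ar: "a \<noteq> r" using False rin by auto
        have "par r a \<noteq> v" using par3[OF sr(2) v(2) vr(1)] ar a_def by simp
        then have "par r a \<noteq> par s a" using B by simp
        moreover have "length (g a r) < n" using A(1) v(1) by simp
        ultimately show False using less.IH A(2) False by blast
      qed
    qed
  qed
  then show "v \<in> C \<Longrightarrow> v \<notin> set (g s r) \<Longrightarrow> par r v = par s v" by blast
qed

lemma chord: "is_path C E (a @ x # b @ y # c) \<Longrightarrow> {x, y} \<in> E \<Longrightarrow> b = []"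
proof -
  assume p: "is_path C E (a @ x # b @ y # c)" and e: "{x,y} \<in> E"
  have "is_path C E (x # b @ [y])" using infix_path[of a "x # b @ [y]" c] p by simp
  then have "g x y = x # b @ [y]" by (intro g_unique) auto
  then show "b = []" using edge_g[OF e] by simp
qed

lemma distinct_two: "distinct p \<Longrightarrow> u \<in> set p \<Longrightarrow> u' \<in> set p \<Longrightarrow> u \<noteq> u' \<Longrightarrow>
  \<exists>a b c. p = a @ u # b @ u' # c \<or> p = a @ u' # b @ u # c"
proof -
  assume "distinct p" "u \<in> set p" "u' \<in> set p" "u \<noteq> u'"
  then obtain a b where p: "p = a @ u # b" by (meson split_list)
  show ?thesis
  proof (cases "u' \<in> set b")
    case True
    then obtain b1 c where "b = b1 @ u' # c" by (meson split_list)
    then show ?thesis using p by auto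
  next
    case False
    then have "u' \<in> set a" using p \<open>u' \<in> set p\<close> \<open>u \<noteq> u'\<close> by auto
    then obtain a1 b1 where "a = a1 @ u' # b1" by (meson split_list)
    then show ?thesis using p by auto
  qed
qed

lemma uniq_cell: "is_path C E p \<Longrightarrow> \<epsilon> \<in> E \<Longrightarrow> \<epsilon> \<notin> set (el p) \<Longrightarrow> u \<in> set p \<Longrightarrow> u \<in> \<epsilon>
   \<Longrightarrow> u' \<in> set p \<Longrightarrow> u' \<in> \<epsilon> \<Longrightarrow> u = u'"
proof (rule ccontr)
  assume p: "is_path C E p" "\<epsilon> \<in> E" "\<epsilon> \<notin> set (el p)" "u \<in> set p" "u \<in> \<epsilon>" "u' \<in> set p" "u' \<in> \<epsilon>"
    and ne: "u \<noteq> u'"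
  have eps: "\<epsilon> = {u, u'}"
  proof -
    have "card \<epsilon> = 2" using edge[OF p(2)] by simp
    then obtain a b where "\<epsilon> = {a,b}" "a \<noteq> b" by (meson card_2_iff)
    then show ?thesis using p(5,7) ne by auto
  qed
  obtain a b c where "p = a @ u # b @ u' # c \<or> p = a @ u' # b @ u # c"
    using distinct_two[OF path_distinct[OF p(1)] p(4,6) ne] by blast
  then show False
  proof
    assume pp: "p = a @ u # b @ u' # c"
    then have "b = []" using chord p(1) p(2) eps by blast
    then have "el p = el (a @ [u]) @ {u, u'} # el (u' # c)" using pp el_append[of a u "u' # c"] by simp
    then show False using p(3) eps by simp
  next
    assume pp: "p = a @ u' # b @ u # c"
    then have "b = []" using chord p(1) p(2) eps by (metis insert_commute)
    then have "el p = el (a @ [u']) @ {u', u} # el (u # c)" using pp el_append[of a u' "u # c"] by simp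
    then show False using p(3) eps by (simp add: insert_commute)
  qed
qed

end


lemma el_map_img: "el (map f p) = map (image f) (el p)"
  by (induction p rule: el.induct) auto

lemma tree_hom:
  assumes G: "graph C' E'" and T: "tree C E" and inj: "inj_on \<rho> C'" and img: "\<rho> ` C' \<subseteq> C"
    and hom: "\<forall>e\<in>E'. \<rho> ` e \<in> E" and h: "h \<in> C'"
    and conn: "\<forall>x\<in>C'. \<exists>w. walk C' E' w \<and> hd w = x \<and> last w = h"
  shows "tree C' E'"
proof -
  interpret tr C E by (rule tr.intro[OF T])
  have ex: "\<exists>p. is_path C' E' p \<and> hd p = x \<and> last p = y" if xy: "x \<in> C'" "y \<in> C'" for x y
  proof -
    obtain w1 where w1: "walk C' E' w1" "hd w1 = x" "last w1 = h" using conn xy by blast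
    obtain w2 where w2: "walk C' E' w2" "hd w2 = y" "last w2 = h" using conn xy by blast
    obtain t where t: "rev w2 = h # t" using w2 unfolding walk_def
      by (metis hd_rev list.collapse rev_is_Nil_conv)
    obtain w1' where w1': "w1 = w1' @ [h]" using w1 unfolding walk_def
      by (metis append_butlast_last_id)
    define W where "W = w1' @ h # t"
    have "el W = el (w1' @ [h]) @ el (h # t)" unfolding W_def by (rule el_append)
    then have "set (el W) \<subseteq> E'" using w1 w2 t w1' unfolding walk_def
      by (metis Un_subset_iff el_rev set_append set_rev)
    moreover have "set W \<subseteq> C'" using w1 w2 t w1' unfolding walk_def W_def
      by (metis Un_subset_iff set_append set_rev)
    ultimately have "walk C' E' W" unfolding walk_def W_def by simp
    moreover have "hd W = x" using w1 w1' unfolding W_def by (cases w1') auto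
    moreover have "last W = y" using w2 t unfolding W_def
      by (metis last_ConsR last_appendR last_rev list.distinct(1) hd_rev last.simps rev.simps(1) walk_def)
    ultimately show ?thesis using walk_reduce distinct_walk_path by metis
  qed
  have un: "p = p'" if p: "is_path C' E' p" "hd p = x" "last p = y"
    and p': "is_path C' E' p'" "hd p' = x" "last p' = y" for p p' x y
  proof -
    have mp: "is_path C E (map \<rho> q)" if q: "is_path C' E' q" for q
    proof -
      have "set (el q) \<subseteq> Pow C'" using q G unfolding is_path_el graph_def by auto
      then have "inj_on (image \<rho>) (set (el q))" using inj_on_image_Pow[OF inj] inj_on_subset by blast
      then have "distinct (el (map \<rho> q))" using q unfolding is_path_el el_map_img
        by (simp add: distinct_map)
      moreover have "set (el (map \<rho> q)) \<subseteq> E" using q hom unfolding is_path_el el_map_img by auto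
      ultimately show ?thesis using q img unfolding is_path_el by auto
    qed
    have ne: "p \<noteq> []" "p' \<noteq> []" using p(1) p'(1) unfolding is_path_el by auto
    have "g (\<rho> x) (\<rho> y) = map \<rho> p" using mp[OF p(1)] p ne
      by (intro g_unique) (auto simp: hd_map last_map)
    moreover have "g (\<rho> x) (\<rho> y) = map \<rho> p'" using mp[OF p'(1)] p' ne
      by (intro g_unique) (auto simp: hd_map last_map)
    ultimately have "map \<rho> p = map \<rho> p'" by simp
    moreover have "inj_on \<rho> (set p \<union> set p')" using p p' inj unfolding is_path_el
      by (meson Un_least inj_on_subset)
    ultimately show ?thesis by (rule map_inj_on)
  qed
  show ?thesis unfolding tree_def using G ex un by blast
qed


definition GG :: "'b set \<Rightarrow> ('b \<Rightarrow> int) \<Rightarrow> int" where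
  "GG S h = (\<Prod>s\<in>S. h s) * (int (card S) - 1) - (\<Sum>s\<in>S. \<Prod>t\<in>S-{s}. h t) + 1"

lemma GG_empty: "GG {} h = 0" by (simp add: GG_def)

lemma pe_Cons: "p \<noteq> [] \<Longrightarrow> path_edges (c # p) = insert {c, hd p} (path_edges p)"
  by (simp add: pe_el el_Cons)

lemma Qstar_cons:
  assumes "length p \<ge> 2" "distinct (c # p)"
  shows "Qstar E q (c # p) = Qpath E q (c # p) (hd p) * Qstar E q p"
proof -
  have ne: "p \<noteq> []" using assms by auto
  have eq: "Qpath E q (c # p) (p ! j) = Qpath E q p (p ! j)" if "1 \<le> j" "j < length p" for j
  proof -
    have "p ! j \<noteq> c" using assms(2) that by (metis distinct.simps(2) nth_mem)
    moreover have "p ! j \<noteq> hd p" using assms(2) that ne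
      by (metis distinct.simps(2) hd_conv_nth le_numeral_extra(2) less_one nat_less_le nth_eq_iff_index_eq
          less_le_trans zero_less_one)
    ultimately show ?thesis unfolding Qpath_def pe_Cons[OF ne] by (intro prod.cong) auto
  qed
  have "Qstar E q (c # p) = (\<Prod>i\<in>{Suc 0..<Suc (length p - 1)}. Qpath E q (c # p) ((c # p) ! i))"
    unfolding Qstar_def using ne by simp
  also have "\<dots> = (\<Prod>j\<in>{0..<length p - 1}. Qpath E q (c # p) (p ! j))"
    by (subst prod.shift_bounds_Suc_ivl) simp
  also have "\<dots> = Qpath E q (c # p) (p ! 0) * (\<Prod>j\<in>{Suc 0..<length p - 1}. Qpath E q (c # p) (p ! j))"
    using assms(1) by (subst prod.atLeast_Suc_lessThan) auto
  also have "(\<Prod>j\<in>{Suc 0..<length p - 1}. Qpath E q (c # p) (p ! j)) = Qstar E q p"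
    unfolding Qstar_def using eq by (intro prod.cong) auto
  finally show ?thesis using ne by (simp add: hd_conv_nth)
qed

locale gl = tr "V \<union> A" E for V A :: "'a set" and E +
  assumes disj: "V \<inter> A = {}" and arr: "\<forall>\<alpha>\<in>A. valency E \<alpha> = 1"
begin

definition Sv where "Sv r v = {e\<in>E. v \<in> e} - {{v, par r v}}"

lemma arr_edge: "\<alpha> \<in> A \<Longrightarrow> \<exists>e. {e'\<in>E. \<alpha> \<in> e'} = {e}"
  using arr unfolding valency_def by (meson card_1_singletonE)

lemma Sv_arr: "r \<in> V \<union> A \<Longrightarrow> \<alpha> \<in> A \<Longrightarrow> \<alpha> \<noteq> r \<Longrightarrow> Sv r \<alpha> = {}"
proof -
  assume a: "r \<in> V \<union> A" "\<alpha> \<in> A" "\<alpha> \<noteq> r"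
  obtain e where e: "{e'\<in>E. \<alpha> \<in> e'} = {e}" using arr_edge[OF a(2)] by blast
  have "{\<alpha>, par r \<alpha>} \<in> E" using par1[OF a(1) _ a(3)] a(2) by blast
  then have "{\<alpha>, par r \<alpha>} \<in> {e'\<in>E. \<alpha> \<in> e'}" by simp
  then have "{\<alpha>, par r \<alpha>} = e" unfolding e by simp
  then show ?thesis unfolding Sv_def e by simp
qed

lemma finSv: "finite (Sv r v)"
  unfolding Sv_def using finE by auto

lemma valency_Sv: "r \<in> V \<union> A \<Longrightarrow> v \<in> V \<union> A \<Longrightarrow> v \<noteq> r \<Longrightarrow> valency E v = card (Sv r v) + 1"
proof -
  assume a: "r \<in> V \<union> A" "v \<in> V \<union> A" "v \<noteq> r"
  have "{v, par r v} \<in> {e\<in>E. v \<in> e}" using par1[OF a] by auto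
  moreover have "finite {e\<in>E. v \<in> e}" using finE by auto
  ultimately show ?thesis unfolding valency_def Sv_def
    using card_Suc_Diff1[of "{e\<in>E. v \<in> e}" "{v, par r v}"] by simp
qed


lemma prod_path_split:
  assumes "length p \<ge> 2"
  shows "(\<Prod>i<length p. F (p ! i)) = F (p ! 0) * (\<Prod>i\<in>{1..<length p - 1}. F (p ! i)) * F (p ! (length p - 1))"
proof -
  have "(\<Prod>i<length p. F (p ! i)) = (\<Prod>i\<in>{0..<length p}. F (p ! i))" by (simp add: atLeast0LessThan)
  also have "\<dots> = F (p ! 0) * (\<Prod>i\<in>{Suc 0..<length p}. F (p ! i))"
    using assms by (subst prod.atLeast_Suc_lessThan) auto
  also have "Suc (length p - 1) = length p" using assms by simp
  then have "{Suc 0..<length p} = {Suc 0..<Suc (length p - 1)}" by simp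
  also have "(\<Prod>i\<in>{Suc 0..<Suc (length p - 1)}. F (p ! i)) = (\<Prod>i\<in>{1..<length p - 1}. F (p ! i)) * F (p ! (length p - 1))"
    using assms by (subst prod.atLeastLessThan_Suc) auto
  finally show ?thesis by (simp add: mult.assoc)
qed

lemma xva_eq:
  assumes r: "r \<in> A" and v: "v \<in> V \<union> A" "v \<noteq> r"
  shows "xva V A E f q v r = f r * Qstar E q (g v r) * (\<Prod>e\<in>Sv r v. q e v)"
proof -
  have rC: "r \<in> V \<union> A" using r by simp
  define \<gamma> where "\<gamma> = g v r"
  have P: "is_path (V \<union> A) E \<gamma>" "hd \<gamma> = v" "last \<gamma> = r" using g_path[OF v(1) rC] \<gamma>_def by auto
  have D: "distinct \<gamma>" using g_distinct[OF v(1) rC] \<gamma>_def by simp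
  have G1: "\<gamma> = v # g (par r v) r" using par1[OF rC v(1) v(2)] \<gamma>_def by simp
  have ne2: "g (par r v) r \<noteq> []" using g_ne par1[OF rC v(1) v(2)] rC by blast
  then have len: "length \<gamma> \<ge> 2" using G1 by (cases "g (par r v) r") auto
  define Inc where "Inc u = {\<epsilon>\<in>E. u \<in> \<epsilon> \<and> \<epsilon> \<notin> path_edges \<gamma>}" for u
  have inc: "incident E \<gamma> = (\<Union>u\<in>set \<gamma>. Inc u)"
    unfolding incident_def Inc_def by auto
  have qp: "q_path q \<epsilon> \<gamma> = q \<epsilon> u" if "u \<in> set \<gamma>" "\<epsilon> \<in> Inc u" for u \<epsilon>
  proof -
    have ex: "\<exists>u'. u' \<in> set \<gamma> \<and> u' \<in> \<epsilon>" using that unfolding Inc_def by blast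
    have "(SOME u'. u' \<in> set \<gamma> \<and> u' \<in> \<epsilon>) = u"
    proof (rule some_equality)
      show "u \<in> set \<gamma> \<and> u \<in> \<epsilon>" using that unfolding Inc_def by simp
      fix u' assume "u' \<in> set \<gamma> \<and> u' \<in> \<epsilon>"
      then show "u' = u" using uniq_cell[OF P(1)] that unfolding Inc_def pe_el by blast
    qed
    then show ?thesis unfolding q_path_def by simp
  qed
  have "(\<Prod>\<epsilon>\<in>incident E \<gamma>. q_path q \<epsilon> \<gamma>) = (\<Prod>u\<in>set \<gamma>. \<Prod>\<epsilon>\<in>Inc u. q_path q \<epsilon> \<gamma>)"
    unfolding inc
  proof (rule prod.UNION_disjoint)
    show "\<forall>u\<in>set \<gamma>. finite (Inc u)" unfolding Inc_def using finE by auto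
    show "\<forall>u\<in>set \<gamma>. \<forall>u'\<in>set \<gamma>. u \<noteq> u' \<longrightarrow> Inc u \<inter> Inc u' = {}"
      using uniq_cell[OF P(1)] unfolding Inc_def pe_el by blast
  qed simp
  also have "\<dots> = (\<Prod>u\<in>set \<gamma>. Qpath E q \<gamma> u)"
    unfolding Qpath_def using qp by (intro prod.cong) (auto simp: Inc_def)
  also have "\<dots> = (\<Prod>i<length \<gamma>. Qpath E q \<gamma> (\<gamma> ! i))"
  proof -
    have "set \<gamma> = (nth \<gamma>) ` {..<length \<gamma>}" by (auto simp: set_conv_nth)
    moreover have "inj_on (nth \<gamma>) {..<length \<gamma>}" using D by (intro inj_on_nth) auto
    ultimately show ?thesis by (simp add: prod.reindex)
  qed
  also have "\<dots> = Qpath E q \<gamma> (\<gamma> ! 0) * Qstar E q \<gamma> * Qpath E q \<gamma> (\<gamma> ! (length \<gamma> - 1))"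
    unfolding Qstar_def by (rule prod_path_split[OF len])
  also have "\<gamma> ! 0 = v" using G1 by simp
  also have "\<gamma> ! (length \<gamma> - 1) = r" using P(3) len by (metis last_conv_nth list.size(3) not_numeral_le_zero)
  also have "Qpath E q \<gamma> r = 1"
  proof -
    obtain e0 where e0: "{e'\<in>E. r \<in> e'} = {e0}" using arr_edge[OF r] by blast
    have "{e \<in> set (el (g r v)). r \<in> e} = {{r, par v r}}" using par4[OF v(1) rC] v(2) by simp
    moreover have "set (el (g r v)) = set (el \<gamma>)" unfolding \<gamma>_def g_rev[OF v(1) rC] el_rev by simp
    ultimately have "{r, par v r} \<in> set (el \<gamma>)" by blast
    moreover have "{r, par v r} \<in> E" using P(1) \<open>{r, par v r} \<in> set (el \<gamma>)\<close> unfolding is_path_el by blast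
    then have "{r, par v r} \<in> {e'\<in>E. r \<in> e'}" by simp
    then have "{r, par v r} = e0" unfolding e0 by simp
    ultimately have e0in: "e0 \<in> set (el \<gamma>)" by simp
    have "{\<epsilon>\<in>E. r \<in> \<epsilon> \<and> \<epsilon> \<notin> path_edges \<gamma>} = {}"
    proof (rule ccontr)
      assume "{\<epsilon>\<in>E. r \<in> \<epsilon> \<and> \<epsilon> \<notin> path_edges \<gamma>} \<noteq> {}"
      then obtain \<epsilon> where "\<epsilon> \<in> E" "r \<in> \<epsilon>" "\<epsilon> \<notin> path_edges \<gamma>" by blast
      moreover from this have "\<epsilon> \<in> {e'\<in>E. r \<in> e'}" by simp
      then have "\<epsilon> = e0" unfolding e0 by simp
      ultimately show False using e0in unfolding pe_el by simp
    qed
    then show ?thesis unfolding Qpath_def by (simp only: prod.empty)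
  qed
  also have "Qpath E q \<gamma> v = (\<Prod>e\<in>Sv r v. q e v)"
  proof -
    have "{e \<in> set (el \<gamma>). v \<in> e} = {{v, par r v}}" using par4[OF rC v] \<gamma>_def by simp
    then have "{\<epsilon>\<in>E. v \<in> \<epsilon> \<and> \<epsilon> \<notin> path_edges \<gamma>} = Sv r v" unfolding Sv_def pe_el
    proof (intro set_eqI iffI)
      fix x assume h: "{e \<in> set (el \<gamma>). v \<in> e} = {{v, par r v}}" "x \<in> {\<epsilon> \<in> E. v \<in> \<epsilon> \<and> \<epsilon> \<notin> set (el \<gamma>)}"
      have "{v, par r v} \<in> {e \<in> set (el \<gamma>). v \<in> e}" unfolding h(1) by simp
      then show "x \<in> {e \<in> E. v \<in> e} - {{v, par r v}}" using h(2) by auto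
    next
      fix x assume h: "{e \<in> set (el \<gamma>). v \<in> e} = {{v, par r v}}" "x \<in> {e \<in> E. v \<in> e} - {{v, par r v}}"
      show "x \<in> {\<epsilon> \<in> E. v \<in> \<epsilon> \<and> \<epsilon> \<notin> set (el \<gamma>)}"
      proof (rule ccontr)
        assume "x \<notin> {\<epsilon> \<in> E. v \<in> \<epsilon> \<and> \<epsilon> \<notin> set (el \<gamma>)}"
        then have "x \<in> {e \<in> set (el \<gamma>). v \<in> e}" using h(2) by simp
        then show False using h by simp
      qed
    qed
    then show ?thesis unfolding Qpath_def by simp
  qed
  finally show ?thesis unfolding xva_def \<gamma>_def by simp
qed

end


context gl begin

lemma Inc_v: "r \<in> V \<union> A \<Longrightarrow> v \<in> V \<union> A \<Longrightarrow> v \<noteq> r \<Longrightarrow>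
  {\<epsilon>\<in>E. v \<in> \<epsilon> \<and> \<epsilon> \<notin> path_edges (g v r)} = Sv r v"
proof -
  assume a: "r \<in> V \<union> A" "v \<in> V \<union> A" "v \<noteq> r"
  have h1: "{e \<in> set (el (g v r)). v \<in> e} = {{v, par r v}}" using par4[OF a] by simp
  have h2: "{v, par r v} \<in> E" using par1[OF a] by simp
  show ?thesis unfolding Sv_def pe_el
  proof (intro set_eqI iffI)
    fix x assume h: "x \<in> {\<epsilon> \<in> E. v \<in> \<epsilon> \<and> \<epsilon> \<notin> set (el (g v r))}"
    have "{v, par r v} \<in> {e \<in> set (el (g v r)). v \<in> e}" unfolding h1 by simp
    then show "x \<in> {e \<in> E. v \<in> e} - {{v, par r v}}" using h by auto
  next
    fix x assume h: "x \<in> {e \<in> E. v \<in> e} - {{v, par r v}}"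
    show "x \<in> {\<epsilon> \<in> E. v \<in> \<epsilon> \<and> \<epsilon> \<notin> set (el (g v r))}"
    proof (rule ccontr)
      assume "x \<notin> {\<epsilon> \<in> E. v \<in> \<epsilon> \<and> \<epsilon> \<notin> set (el (g v r))}"
      then have "x \<in> {e \<in> set (el (g v r)). v \<in> e}" using h by simp
      then show False using h h1 by simp
    qed
  qed
qed

lemma edge_obtain: "e \<in> E \<Longrightarrow> v \<in> e \<Longrightarrow> \<exists>c. e = {v, c} \<and> c \<noteq> v \<and> c \<in> V \<union> A"
proof -
  assume e: "e \<in> E" "v \<in> e"
  obtain a b where ab: "e = {a,b}" "a \<noteq> b" using edge[OF e(1)] by (meson card_2_iff)
  then have "e = {v, (if a = v then b else a)} \<and> (if a = v then b else a) \<noteq> v"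
    using e(2) by auto
  moreover have "(if a = v then b else a) \<in> V \<union> A" using edge[OF e(1)] ab by auto
  ultimately show ?thesis by blast
qed

lemma children_sum:
  assumes r: "r \<in> A" and v: "v \<in> V \<union> A" "v \<noteq> r"
  shows "(\<Sum>c\<in>{c\<in>(V \<union> A) - {r}. par r c = v}. f r * Qstar E q (g c r))
       = (\<Sum>e\<in>Sv r v. f r * Qstar E q (g v r) * (\<Prod>t\<in>Sv r v - {e}. q t v))"
proof -
  have rC: "r \<in> V \<union> A" using r by simp
  define Ch where "Ch = {c\<in>(V \<union> A) - {r}. par r c = v}"
  have cv: "c \<noteq> v" if "c \<in> Ch" for c
    using par1[of r c] that rC unfolding Ch_def by auto
  have gc: "g c r = c # g v r" if "c \<in> Ch" for c
    using par1[of r c] that rC unfolding Ch_def by auto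
  have img: "(\<lambda>c. {v, c}) ` Ch = Sv r v"
  proof (intro set_eqI iffI)
    fix e assume "e \<in> (\<lambda>c. {v, c}) ` Ch"
    then obtain c where c: "c \<in> Ch" "e = {v, c}" by blast
    have cC: "c \<in> V \<union> A" "c \<noteq> r" "par r c = v" using c(1) unfolding Ch_def by auto
    have "{c, v} \<in> E" using par1[OF rC cC(1,2)] cC(3) by simp
    then have "e \<in> E" using c(2) by (simp add: insert_commute)
    moreover have "e \<noteq> {v, par r v}"
    proof
      assume "e = {v, par r v}"
      then have "c = par r v" using c(2) cv[OF c(1)] by (metis doubleton_eq_iff)
      then show False using par3[OF rC v] cC by auto
    qed
    ultimately show "e \<in> Sv r v" unfolding Sv_def using c(2) by simp
  next
    fix e assume e: "e \<in> Sv r v"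
    then have eE: "e \<in> E" "v \<in> e" "e \<noteq> {v, par r v}" unfolding Sv_def by auto
    obtain c where c: "e = {v, c}" "c \<noteq> v" "c \<in> V \<union> A" using edge_obtain[OF eE(1,2)] by blast
    have "c \<noteq> par r v" using c eE(3) by auto
    then have "c \<noteq> r \<and> par r c = v" using par2[OF rC v] c eE(1) by blast
    then have "c \<in> Ch" unfolding Ch_def using c by simp
    then show "e \<in> (\<lambda>c. {v, c}) ` Ch" using c by blast
  qed
  have inj: "inj_on (\<lambda>c. {v, c}) Ch"
    by (rule inj_onI) (metis cv doubleton_eq_iff)
  have len: "length (g v r) \<ge> 2"
  proof -
    have "g v r = v # g (par r v) r" using par1[OF rC v] by simp
    moreover have "g (par r v) r \<noteq> []" using g_ne par1[OF rC v] rC by blast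
    ultimately show ?thesis by (cases "g (par r v) r") auto
  qed
  have wc: "f r * Qstar E q (g c r) = f r * Qstar E q (g v r) * (\<Prod>t\<in>Sv r v - {{v, c}}. q t v)"
    if c: "c \<in> Ch" for c
  proof -
    have cC: "c \<in> V \<union> A" using c unfolding Ch_def by simp
    have d: "distinct (c # g v r)" using g_distinct[OF cC rC] gc[OF c] by simp
    have h: "hd (g v r) = v" using g_path v rC by blast
    have ne: "g v r \<noteq> []" using g_ne v rC by blast
    have "Qstar E q (g c r) = Qpath E q (c # g v r) v * Qstar E q (g v r)"
      using Qstar_cons[OF len d] gc[OF c] h by simp
    moreover have "{\<epsilon>\<in>E. v \<in> \<epsilon> \<and> \<epsilon> \<notin> path_edges (c # g v r)} = Sv r v - {{v, c}}"
      using Inc_v[OF rC v] unfolding pe_Cons[OF ne] h by (auto simp: insert_commute)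
    ultimately show ?thesis unfolding Qpath_def by simp
  qed
  have "(\<Sum>e\<in>Sv r v. f r * Qstar E q (g v r) * (\<Prod>t\<in>Sv r v - {e}. q t v))
      = (\<Sum>c\<in>Ch. f r * Qstar E q (g v r) * (\<Prod>t\<in>Sv r v - {{v, c}}. q t v))"
    unfolding img[symmetric] by (simp add: sum.reindex[OF inj])
  also have "\<dots> = (\<Sum>c\<in>Ch. f r * Qstar E q (g c r))" by (rule sum.cong[OF refl], rule wc[symmetric], assumption)
  finally show ?thesis unfolding Ch_def by simp
qed

lemma root_children:
  assumes r: "r \<in> A"
  shows "(\<Sum>c\<in>{c\<in>(V \<union> A) - {r}. par r c = r}. f r * Qstar E q (g c r)) = f r"
proof -
  have rC: "r \<in> V \<union> A" using r by simp
  obtain e0 where e0: "{e'\<in>E. r \<in> e'} = {e0}" using arr_edge[OF r] by blast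
  have "e0 \<in> {e'\<in>E. r \<in> e'}" unfolding e0 by simp
  then obtain n where n: "e0 = {r, n}" "n \<noteq> r" "n \<in> V \<union> A" using edge_obtain by blast
  have gn: "g n r = [n, r]" using edge_g[of n r] \<open>e0 \<in> {e'\<in>E. r \<in> e'}\<close> n by (simp add: insert_commute)
  have "{c\<in>(V \<union> A) - {r}. par r c = r} = {n}"
  proof (intro set_eqI iffI)
    fix c assume c: "c \<in> {c\<in>(V \<union> A) - {r}. par r c = r}"
    then have "{c, r} \<in> E" using par1[OF rC, of c] by auto
    then have "{c, r} \<in> {e'\<in>E. r \<in> e'}" by simp
    then have "{c, r} = {r, n}" unfolding e0 n by simp
    then show "c \<in> {n}" using c by (auto simp: doubleton_eq_iff)
  next
    fix c assume "c \<in> {n}"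
    then show "c \<in> {c\<in>(V \<union> A) - {r}. par r c = r}" using n gn unfolding par_def by simp
  qed
  moreover have "Qstar E q [n, r] = 1" unfolding Qstar_def by simp
  ultimately show ?thesis using gn by simp
qed

end


context gl begin

lemma GL:
  assumes r: "r \<in> A" and fr: "f r \<noteq> 0"
  shows "(\<Sum>v\<in>V \<union> A0 A f. xva V A E f q v r * (int (valency E v) - 2))
    = - f r + (\<Sum>\<alpha>\<in>(A - A0 A f) - {r}. f r * Qstar E q (g \<alpha> r))
      + (\<Sum>v\<in>V. f r * Qstar E q (g v r) * GG (Sv r v) (\<lambda>e. q e v))"
proof -
  have rC: "r \<in> V \<union> A" using r by simp
  define C where "C = V \<union> A"
  define Cm where "Cm = C - {r}"
  define ww where "ww c = f r * Qstar E q (g c r)" for c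
  define Ch where "Ch v = {c\<in>Cm. par r c = v}" for v
  define K where "K v = xva V A E f q v r * (int (valency E v) - 2)" for v
  define GV where "GV v = GG (Sv r v) (\<lambda>e. q e v)" for v
  have finC: "finite C" using fin C_def by simp
  have finCm: "finite Cm" using finC Cm_def by simp
  have Kv: "K v = (\<Sum>c\<in>Ch v. ww c) - ww v + ww v * GV v" if v: "v \<in> Cm" for v
  proof -
    have vC: "v \<in> V \<union> A" "v \<noteq> r" using v Cm_def C_def by auto
    define S where "S = Sv r v"
    have "(\<Sum>c\<in>Ch v. ww c) = (\<Sum>e\<in>S. ww v * (\<Prod>t\<in>S - {e}. q t v))"
      using children_sum[OF r vC] unfolding Ch_def Cm_def C_def ww_def S_def by simp
    also have "\<dots> = ww v * (\<Sum>e\<in>S. \<Prod>t\<in>S - {e}. q t v)" by (simp add: sum_distrib_left)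
    finally have 1: "(\<Sum>c\<in>Ch v. ww c) = ww v * (\<Sum>e\<in>S. \<Prod>t\<in>S - {e}. q t v)" .
    have 2: "K v = ww v * (\<Prod>e\<in>S. q e v) * (int (card S) - 1)"
      unfolding K_def xva_eq[OF r vC] valency_Sv[OF rC vC] ww_def S_def by simp
    show ?thesis unfolding 1 2 GV_def GG_def S_def[symmetric] by (simp add: algebra_simps)
  qed
  have swap: "(\<Sum>v\<in>Cm. \<Sum>c\<in>Ch v. ww c) = (\<Sum>c\<in>Cm. ww c) - f r"
  proof -
    have "(\<Sum>v\<in>Cm. \<Sum>c\<in>Ch v. ww c) = (\<Sum>v\<in>Cm. \<Sum>c\<in>Cm. if par r c = v then ww c else 0)"
      unfolding Ch_def using finCm by (simp add: sum.inter_filter)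
    also have "\<dots> = (\<Sum>c\<in>Cm. \<Sum>v\<in>Cm. if par r c = v then ww c else 0)" by (rule sum.swap)
    also have "\<dots> = (\<Sum>c\<in>Cm. if par r c \<in> Cm then ww c else 0)"
      using finCm by (simp add: sum.delta)
    also have "\<dots> = (\<Sum>c\<in>Cm. ww c - (if par r c = r then ww c else 0))"
    proof (rule sum.cong[OF refl])
      fix c assume "c \<in> Cm"
      then have "par r c \<in> C" using par1[OF rC, of c] unfolding Cm_def C_def by auto
      then show "(if par r c \<in> Cm then ww c else 0) = ww c - (if par r c = r then ww c else 0)"
        unfolding Cm_def by auto
    qed
    also have "\<dots> = (\<Sum>c\<in>Cm. ww c) - (\<Sum>c\<in>Ch r. ww c)"
      unfolding Ch_def using finCm by (simp add: sum_subtractf sum.inter_filter)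
    also have "(\<Sum>c\<in>Ch r. ww c) = f r"
      using root_children[OF r] unfolding Ch_def Cm_def C_def ww_def by simp
    finally show ?thesis .
  qed
  have GVA: "GV \<alpha> = 0" if "\<alpha> \<in> A" "\<alpha> \<noteq> r" for \<alpha>
    unfolding GV_def Sv_arr[OF rC that] GG_empty by simp
  have ChA: "(\<Sum>c\<in>Ch \<alpha>. ww c) = 0" if "\<alpha> \<in> A" "\<alpha> \<noteq> r" for \<alpha>
    using children_sum[OF r _ that(2)] that Sv_arr[OF rC that]
    unfolding Ch_def Cm_def C_def ww_def by simp
  have A0sub: "A0 A f \<subseteq> A" "r \<notin> A0 A f" using fr unfolding A0_def by auto
  have rV: "r \<notin> V" using disj r by auto
  have Cm_split: "Cm = (V \<union> A0 A f) \<union> ((A - A0 A f) - {r})" "(V \<union> A0 A f) \<inter> ((A - A0 A f) - {r}) = {}"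
    unfolding Cm_def C_def using A0sub rV disj by auto
  have Cm_split2: "Cm = V \<union> (A - {r})" "V \<inter> (A - {r}) = {}"
    unfolding Cm_def C_def using rV disj by auto
  have finV: "finite V" "finite A" using finC C_def by auto
  have "(\<Sum>v\<in>Cm. K v) = (\<Sum>v\<in>V \<union> A0 A f. K v) + (\<Sum>v\<in>(A - A0 A f) - {r}. K v)"
    unfolding Cm_split(1) using finV A0sub Cm_split(2)
    by (intro sum.union_disjoint) (auto intro: finite_subset)
  moreover have "(\<Sum>v\<in>Cm. K v) = (\<Sum>c\<in>Cm. ww c) - f r - (\<Sum>v\<in>Cm. ww v) + (\<Sum>v\<in>Cm. ww v * GV v)"
    using Kv swap by (simp add: sum.distrib sum_subtractf)
  moreover have "(\<Sum>v\<in>Cm. ww v * GV v) = (\<Sum>v\<in>V. ww v * GV v)"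
  proof -
    have "(\<Sum>v\<in>Cm. ww v * GV v) = (\<Sum>v\<in>V. ww v * GV v) + (\<Sum>v\<in>A - {r}. ww v * GV v)"
      unfolding Cm_split2(1) using finV Cm_split2(2) by (intro sum.union_disjoint) auto
    moreover have "(\<Sum>v\<in>A - {r}. ww v * GV v) = 0" using GVA by simp
    ultimately show ?thesis by simp
  qed
  moreover have "(\<Sum>v\<in>(A - A0 A f) - {r}. K v) = - (\<Sum>v\<in>(A - A0 A f) - {r}. ww v)"
  proof -
    have "K v = - ww v" if "v \<in> (A - A0 A f) - {r}" for v
    proof -
      have "v \<in> Cm" "v \<in> A" "v \<noteq> r" using that Cm_split(1) by auto
      then show ?thesis using Kv GVA ChA by simp
    qed
    then show ?thesis by (simp add: sum_negf)
  qed
  ultimately show ?thesis unfolding K_def ww_def GV_def by simp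
qed

end


lemma GG_insert:
  assumes "finite S" "z \<notin> S"
  shows "GG (insert z S) h = h z * GG S h + (h z - 1) * ((\<Prod>s\<in>S. h s) - 1)"
proof -
  have 1: "(\<Prod>s\<in>insert z S. h s) = h z * (\<Prod>s\<in>S. h s)" using assms by simp
  have 2: "card (insert z S) = card S + 1" using assms by simp
  have 3: "(\<Sum>s\<in>insert z S. \<Prod>t\<in>insert z S - {s}. h t)
      = (\<Prod>t\<in>S. h t) + h z * (\<Sum>s\<in>S. \<Prod>t\<in>S - {s}. h t)"
  proof -
    have "(\<Sum>s\<in>insert z S. \<Prod>t\<in>insert z S - {s}. h t)
        = (\<Prod>t\<in>insert z S - {z}. h t) + (\<Sum>s\<in>S. \<Prod>t\<in>insert z S - {s}. h t)"
      using assms by simp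
    also have "insert z S - {z} = S" using assms by auto
    also have "(\<Sum>s\<in>S. \<Prod>t\<in>insert z S - {s}. h t) = (\<Sum>s\<in>S. h z * (\<Prod>t\<in>S - {s}. h t))"
    proof (rule sum.cong[OF refl])
      fix s assume s: "s \<in> S"
      have "insert z S - {s} = insert z (S - {s})" using s assms by auto
      then show "(\<Prod>t\<in>insert z S - {s}. h t) = h z * (\<Prod>t\<in>S - {s}. h t)" using assms by simp
    qed
    finally show ?thesis by (simp add: sum_distrib_left)
  qed
  show ?thesis unfolding GG_def 1 2 3 by (simp add: algebra_simps)
qed

lemma GG_ones:
  assumes "finite T" "finite S" "S \<inter> T = {}" "\<forall>t\<in>T. h t = 1"
  shows "GG (S \<union> T) h = GG S h"
  using assms
proof (induction T rule: finite_induct)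
  case (insert x F)
  have "GG (S \<union> insert x F) h = GG (insert x (S \<union> F)) h" by simp
  also have "\<dots> = h x * GG (S \<union> F) h + (h x - 1) * ((\<Prod>s\<in>S \<union> F. h s) - 1)"
    using insert by (intro GG_insert) auto
  also have "\<dots> = GG S h" using insert by auto
  finally show ?case .
qed simp

lemma GG_merge:
  assumes "finite S1" "finite S2" "S1 \<inter> S2 = {}" "card {s\<in>S2. h s \<noteq> 1} \<le> 1"
  shows "GG (S1 \<union> S2) h = (\<Prod>s\<in>S2. h s) * GG S1 h + ((\<Prod>s\<in>S2. h s) - 1) * ((\<Prod>s\<in>S1. h s) - 1)"
proof (cases "{s\<in>S2. h s \<noteq> 1} = {}")
  case True
  then have "\<forall>t\<in>S2. h t = 1" by auto
  then show ?thesis using GG_ones[OF assms(2,1,3)] by simp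
next
  case False
  have fin: "finite {s\<in>S2. h s \<noteq> 1}" using assms(2) by simp
  then have "card {s\<in>S2. h s \<noteq> 1} = 1" using False assms(4) by (simp add: card_gt_0_iff le_antisym Suc_leI)
  then obtain t where t: "{s\<in>S2. h s \<noteq> 1} = {t}" by (meson card_1_singletonE)
  have tS: "t \<in> S2" using t by auto
  have ones: "\<forall>s\<in>S2 - {t}. h s = 1"
  proof
    fix s assume s: "s \<in> S2 - {t}"
    show "h s = 1"
    proof (rule ccontr)
      assume "h s \<noteq> 1"
      then have "s \<in> {s\<in>S2. h s \<noteq> 1}" using s by simp
      then show False unfolding t using s by simp
    qed
  qed
  have P2: "(\<Prod>s\<in>S2. h s) = h t"
  proof -
    have "(\<Prod>s\<in>S2. h s) = h t * (\<Prod>s\<in>S2 - {t}. h s)" using assms(2) tS by (simp add: prod.remove)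
    also have "(\<Prod>s\<in>S2 - {t}. h s) = 1" using ones by simp
    finally show ?thesis by simp
  qed
  have "S1 \<union> S2 = insert t (S1 \<union> (S2 - {t}))" using tS by auto
  moreover have "GG (insert t (S1 \<union> (S2 - {t}))) h = h t * GG (S1 \<union> (S2 - {t})) h + (h t - 1) * ((\<Prod>s\<in>S1 \<union> (S2 - {t}). h s) - 1)"
    using assms tS by (intro GG_insert) auto
  ultimately have "GG (S1 \<union> S2) h = h t * GG (S1 \<union> (S2 - {t})) h + (h t - 1) * ((\<Prod>s\<in>S1 \<union> (S2 - {t}). h s) - 1)"
    by simp
  also have "GG (S1 \<union> (S2 - {t})) h = GG S1 h" using GG_ones[of "S2 - {t}" S1 h] assms ones by auto
  also have "(\<Prod>s\<in>S1 \<union> (S2 - {t}). h s) = (\<Prod>s\<in>S1. h s)"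
    using assms ones by (subst prod.union_disjoint) auto
  finally show ?thesis using P2 by simp
qed

lemma GG_reindex:
  assumes "inj_on \<phi> S"
  shows "GG (\<phi> ` S) h = GG S (h \<circ> \<phi>)"
proof -
  have "(\<Prod>t\<in>\<phi> ` S - {\<phi> s}. h t) = (\<Prod>t\<in>S - {s}. h (\<phi> t))" if "s \<in> S" for s
  proof -
    have "\<phi> ` S - {\<phi> s} = \<phi> ` (S - {s})" using assms that by (auto simp: inj_on_def)
    moreover have "inj_on \<phi> (S - {s})" using assms by (rule inj_on_subset) auto
    ultimately show ?thesis by (simp add: prod.reindex)
  qed
  then show ?thesis unfolding GG_def using assms
    by (simp add: prod.reindex sum.reindex card_image)
qed

context gl begin

lemma MT_sum:
  "MT V A E f q = (\<Sum>r\<in>A - A0 A f. - (\<Sum>v\<in>V \<union> A0 A f. xva V A E f q v r * (int (valency E v) - 2)))"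
proof -
  have "(\<Sum>v\<in>V \<union> A0 A f. Nv V A E f q v * (int (valency E v) - 2))
      = (\<Sum>v\<in>V \<union> A0 A f. \<Sum>r\<in>A - A0 A f. xva V A E f q v r * (int (valency E v) - 2))"
    unfolding Nv_def by (simp add: sum_distrib_right)
  also have "\<dots> = (\<Sum>r\<in>A - A0 A f. \<Sum>v\<in>V \<union> A0 A f. xva V A E f q v r * (int (valency E v) - 2))"
    by (rule sum.swap)
  finally show ?thesis unfolding MT_def by (simp add: sum_negf)
qed

lemma MT_formula:
  "MT V A E f q = (\<Sum>r\<in>A - A0 A f. f r - (\<Sum>\<alpha>\<in>(A - A0 A f) - {r}. f r * Qstar E q (g \<alpha> r))
      - (\<Sum>v\<in>V. f r * Qstar E q (g v r) * GG (Sv r v) (\<lambda>e. q e v)))"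
  unfolding MT_sum
proof (rule sum.cong[OF refl])
  fix r assume "r \<in> A - A0 A f"
  then have "r \<in> A" "f r \<noteq> 0" unfolding A0_def by auto
  then show "- (\<Sum>v\<in>V \<union> A0 A f. xva V A E f q v r * (int (valency E v) - 2)) =
    f r - (\<Sum>\<alpha>\<in>(A - A0 A f) - {r}. f r * Qstar E q (g \<alpha> r)) - (\<Sum>v\<in>V. f r * Qstar E q (g v r) * GG (Sv r v) (\<lambda>e. q e v))"
    using GL[of r f q] by simp
qed

lemma arr_end: "\<alpha> \<in> A \<Longrightarrow> is_path (V \<union> A) E p \<Longrightarrow> \<alpha> \<in> set p \<Longrightarrow> \<alpha> = hd p \<or> \<alpha> = last p"
proof (rule ccontr)
  assume a: "\<alpha> \<in> A" "is_path (V \<union> A) E p" "\<alpha> \<in> set p" "\<not> (\<alpha> = hd p \<or> \<alpha> = last p)"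
  obtain xs ys where p: "p = xs @ \<alpha> # ys" using a(3) by (meson split_list)
  have "xs \<noteq> []" "ys \<noteq> []" using a(4) p by auto
  then obtain xs' x y ys' where xy: "xs = xs' @ [x]" "ys = y # ys'"
    by (metis append_butlast_last_id list.exhaust)
  have el: "el p = el (xs' @ [x]) @ {x, \<alpha>} # {\<alpha>, y} # el (y # ys')"
    using el_append[of "xs' @ [x]" \<alpha> "y # ys'"] el_append[of xs' x "[\<alpha>, y] @ ys'"] p xy by simp
  have d: "distinct p" using path_distinct[OF a(2)] .
  then have "x \<noteq> y" using p xy by auto
  then have ne: "{x, \<alpha>} \<noteq> {\<alpha>, y}" by (auto simp: doubleton_eq_iff)
  have E: "{x, \<alpha>} \<in> E" "{\<alpha>, y} \<in> E" using a(2) el unfolding is_path_el by auto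
  obtain e where e: "{e'\<in>E. \<alpha> \<in> e'} = {e}" using arr_edge[OF a(1)] by blast
  have "{x, \<alpha>} \<in> {e'\<in>E. \<alpha> \<in> e'}" "{\<alpha>, y} \<in> {e'\<in>E. \<alpha> \<in> e'}" using E by auto
  then have "{x, \<alpha>} = e" "{\<alpha>, y} = e" unfolding e by auto
  then show False using ne by simp
qed

lemma concat_walk:
  assumes "walk C' E' p" "walk C' E' p'" "last p = hd p'"
  shows "walk C' E' (p @ tl p') \<and> hd (p @ tl p') = hd p \<and> last (p @ tl p') = last p'
    \<and> set (el (p @ tl p')) = set (el p) \<union> set (el p') \<and> set (p @ tl p') = set p \<union> set p'"
proof -
  obtain a x where a: "p = a @ [x]" using assms(1) unfolding walk_def by (metis rev_exhaust)
  obtain y t where t: "p' = y # t" using assms(2) unfolding walk_def by (metis list.exhaust)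
  have xy: "x = y" using assms(3) a t by simp
  have W: "p @ tl p' = a @ x # t" using a t by simp
  have 1: "el (p @ tl p') = el p @ el p'" unfolding W el_append[of a x t] using a t xy by simp
  have 2: "set (p @ tl p') = set p \<union> set p'" unfolding W using a t xy by auto
  have 3: "hd (p @ tl p') = hd p" unfolding W a by (cases a) auto
  have 4: "last (p @ tl p') = last p'" unfolding W using t xy by (cases t) auto
  show ?thesis using assms 1 2 3 4 unfolding walk_def by auto
qed

end


context gl begin

lemma arr_in_path: "\<alpha> \<in> A \<Longrightarrow> x \<in> V \<union> A \<Longrightarrow> x \<noteq> \<alpha> \<Longrightarrow> e \<in> E \<Longrightarrow> \<alpha> \<in> e \<Longrightarrow> e \<in> set (el (g x \<alpha>))"
proof -
  assume a: "\<alpha> \<in> A" "x \<in> V \<union> A" "x \<noteq> \<alpha>" "e \<in> E" "\<alpha> \<in> e"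
  have aC: "\<alpha> \<in> V \<union> A" using a by simp
  obtain e0 where e0: "{e'\<in>E. \<alpha> \<in> e'} = {e0}" using arr_edge[OF a(1)] by blast
  have "{e \<in> set (el (g \<alpha> x)). \<alpha> \<in> e} = {{\<alpha>, par x \<alpha>}}" using par4[OF a(2) aC] a(3) by simp
  moreover have "set (el (g \<alpha> x)) = set (el (g x \<alpha>))" unfolding g_rev[OF a(2) aC] el_rev by simp
  ultimately have 1: "{\<alpha>, par x \<alpha>} \<in> set (el (g x \<alpha>))" by blast
  then have "{\<alpha>, par x \<alpha>} \<in> E" using g_el[OF a(2) aC] by blast
  then have "{\<alpha>, par x \<alpha>} \<in> {e'\<in>E. \<alpha> \<in> e'}" by simp
  then have 2: "{\<alpha>, par x \<alpha>} = e0" unfolding e0 by simp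
  have "e \<in> {e'\<in>E. \<alpha> \<in> e'}" using a by simp
  then have "e = e0" unfolding e0 by simp
  then show ?thesis using 1 2 by simp
qed

end

locale mt = gl V A E for V A :: "'a set" and E +
  fixes f :: "'a \<Rightarrow> int" and q :: "'a set \<Rightarrow> 'a \<Rightarrow> int" and v0 :: 'a and X :: "'a set"
  assumes v0: "v0 \<in> V" and q0: "\<forall>e\<in>E. v0 \<in> e \<longrightarrow> q e v0 = 1"
    and pr: "\<forall>v\<in>V - {v0}. card {e\<in>E. v \<in> e \<and> e \<notin> path_edges (gamma (V \<union> A) E v0 v) \<and> q e v \<noteq> 1} \<le> 1"
    and X: "X \<subseteq> A - A0 A f" "X \<noteq> {}"
begin

abbreviation "sV \<equiv> subV V A E v0 X"
abbreviation "sE \<equiv> subE V A E v0 X"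
abbreviation "S \<equiv> sV \<union> X"
abbreviation "nv \<equiv> newv V A E q v0 X"
abbreviation "b \<equiv> bv V A E q v0 X"

lemma v0C: "v0 \<in> V \<union> A" using v0 by simp
lemma XA: "X \<subseteq> A" using X unfolding A0_def by auto
lemma XC: "\<alpha> \<in> X \<Longrightarrow> \<alpha> \<in> V \<union> A" using XA by auto
lemma sVV: "sV \<subseteq> V" unfolding subV_def by auto
lemma SC: "S \<subseteq> V \<union> A" using sVV XA by auto
lemma finS: "finite S" using SC fin finite_subset by blast
lemma nv_sV: "nv \<subseteq> sV" unfolding newv_def by auto

lemma F1: "\<alpha> \<in> X \<Longrightarrow> set (g v0 \<alpha>) \<subseteq> sV \<union> {\<alpha>}"
proof
  fix u assume a: "\<alpha> \<in> X" and u: "u \<in> set (g v0 \<alpha>)"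
  show "u \<in> sV \<union> {\<alpha>}"
  proof (cases "u \<in> A")
    case True
    have "u = hd (g v0 \<alpha>) \<or> u = last (g v0 \<alpha>)" using arr_end[OF True _ u] g_path[OF v0C XC[OF a]] by blast
    then have "u = v0 \<or> u = \<alpha>" using g_path[OF v0C XC[OF a]] by simp
    then show ?thesis using True v0 disj by auto
  next
    case False
    then have "u \<in> V" using g_set[OF v0C XC[OF a]] u by auto
    then show ?thesis unfolding subV_def using u a by auto
  qed
qed

lemma F2: "u \<in> S \<Longrightarrow> \<exists>\<alpha>\<in>X. u \<in> set (g v0 \<alpha>)"
proof -
  assume "u \<in> S"
  then show ?thesis
  proof
    assume "u \<in> sV" then show ?thesis unfolding subV_def by auto
  next
    assume u: "u \<in> X"
    then have "u \<in> set (g v0 u)" using g_path[OF v0C XC[OF u]] g_ne[OF v0C XC[OF u]] by (metis last_in_set)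
    then show ?thesis using u by blast
  qed
qed

lemma F3: "u \<in> S \<Longrightarrow> set (el (g v0 u)) \<subseteq> sE \<and> set (g v0 u) \<subseteq> S"
proof -
  assume "u \<in> S"
  then obtain \<alpha> where a: "\<alpha> \<in> X" "u \<in> set (g v0 \<alpha>)" using F2 by blast
  then obtain xs ys where s: "g v0 \<alpha> = xs @ u # ys" by (meson split_list)
  have p: "g v0 u = xs @ [u]" using g_prefix[OF v0C XC[OF a(1)] s] .
  have "set (el (g v0 u)) \<subseteq> set (el (g v0 \<alpha>))" unfolding p s el_append[of xs u ys] by simp
  moreover have "set (el (g v0 \<alpha>)) \<subseteq> sE" unfolding subE_def pe_el using a(1) by auto
  moreover have "set (g v0 u) \<subseteq> set (g v0 \<alpha>)" unfolding p s by auto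
  ultimately show ?thesis using F1[OF a(1)] a(1) by auto
qed

lemma v0S: "v0 \<in> sV"
proof -
  obtain \<alpha> where "\<alpha> \<in> X" using X by blast
  then have "v0 \<in> set (g v0 \<alpha>)" using g_path[OF v0C XC] g_ne[OF v0C XC] by (metis hd_in_set)
  then show ?thesis unfolding subV_def using v0 \<open>\<alpha> \<in> X\<close> by auto
qed

lemma F4: "a \<in> S \<Longrightarrow> c \<in> S \<Longrightarrow> set (el (g a c)) \<subseteq> sE \<and> set (g a c) \<subseteq> S"
proof -
  assume a: "a \<in> S" "c \<in> S"
  have aC: "a \<in> V \<union> A" and cC: "c \<in> V \<union> A" using a SC by auto
  have w1: "walk (V \<union> A) E (g a v0)" using g_path[OF aC v0C] path_walk by blast
  have w2: "walk (V \<union> A) E (g v0 c)" using g_path[OF v0C cC] path_walk by blast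
  have l: "last (g a v0) = hd (g v0 c)" using g_path[OF aC v0C] g_path[OF v0C cC] by simp
  note cw = concat_walk[OF w1 w2 l]
  have hl: "hd (g a v0 @ tl (g v0 c)) = a" "last (g a v0 @ tl (g v0 c)) = c"
    using cw g_path[OF aC v0C] g_path[OF v0C cC] by auto
  have "set (el (g a c)) \<subseteq> set (el (g a v0)) \<union> set (el (g v0 c))
      \<and> set (g a c) \<subseteq> set (g a v0) \<union> set (g v0 c)"
    using walk_g[of "g a v0 @ tl (g v0 c)"] cw hl by simp
  moreover have "set (el (g a v0)) = set (el (g v0 a))" "set (g a v0) = set (g v0 a)"
    unfolding g_rev[OF v0C aC] el_rev by simp_all
  ultimately show ?thesis using F3[OF a(1)] F3[OF a(2)] by auto
qed

lemma F7: "e \<in> sE \<Longrightarrow> e \<in> E \<and> e \<subseteq> S"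
proof -
  assume "e \<in> sE"
  then obtain \<alpha> where a: "\<alpha> \<in> X" "e \<in> set (el (g v0 \<alpha>))" unfolding subE_def pe_el by auto
  have "e \<in> E" using g_el[OF v0C XC[OF a(1)]] a(2) by auto
  moreover have "e \<subseteq> set (g v0 \<alpha>)" using el_sub a(2) by blast
  ultimately show ?thesis using F1[OF a(1)] a(1) by auto
qed

definition nb where "nb v = (SOME u. {v, u} \<in> E \<and> {v, u} \<notin> sE)"

lemma F8: "v \<in> nv \<Longrightarrow> {v, nb v} \<in> E \<and> {v, nb v} \<notin> sE"
proof -
  assume v: "v \<in> nv"
  then have "b v \<noteq> 1" unfolding newv_def by simp
  then have "{e\<in>E. v \<in> e \<and> e \<notin> sE} \<noteq> {}" unfolding bv_def by (metis (no_types, lifting) prod.empty)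
  then obtain e where e: "e \<in> E" "v \<in> e" "e \<notin> sE" by blast
  then obtain c where "e = {v, c}" using edge_obtain by blast
  then have "\<exists>u. {v, u} \<in> E \<and> {v, u} \<notin> sE" using e by blast
  then show ?thesis unfolding nb_def by (rule someI_ex)
qed

lemma F9: "v \<in> nv \<Longrightarrow> nb v \<notin> S"
proof
  assume v: "v \<in> nv" and n: "nb v \<in> S"
  have vS: "v \<in> S" using v nv_sV by auto
  have "g v (nb v) = [v, nb v]" using edge_g F8[OF v] by blast
  then have "{v, nb v} \<in> sE" using F4[OF vS n] by simp
  then show False using F8[OF v] by simp
qed

lemma F10: "v \<in> nv \<Longrightarrow> v' \<in> nv \<Longrightarrow> nb v = nb v' \<Longrightarrow> v = v'"
proof (rule ccontr)
  assume v: "v \<in> nv" "v' \<in> nv" "nb v = nb v'" "v \<noteq> v'"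
  have vS: "v \<in> S" "v' \<in> S" using v nv_sV by auto
  define u where "u = nb v"
  have e: "{v, u} \<in> E" "{u, v'} \<in> E" using F8[OF v(1)] F8[OF v(2)] v(3) u_def by (auto simp: insert_commute)
  have uS: "u \<notin> S" using F9[OF v(1)] u_def by simp
  have C3: "v \<in> V \<union> A" "u \<in> V \<union> A" "v' \<in> V \<union> A" using e edge by auto
  have "walk (V \<union> A) E [v, u, v']" unfolding walk_def using e C3 by auto
  moreover have "distinct [v, u, v']" using v(4) uS vS by auto
  ultimately have "is_path (V \<union> A) E [v, u, v']" by (rule distinct_walk_path)
  then have "g v v' = [v, u, v']" by (intro g_unique) auto
  then have "u \<in> S" using F4[OF vS] by auto
  then show False using uS by simp
qed

end


context mt begin

abbreviation "CXt \<equiv> TX_V V A E v0 X \<union> TX_A V A E q v0 X"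
abbreviation "EXt \<equiv> TX_E V A E q v0 X"

lemma CX_eq: "CXt = Inl ` S \<union> Inr ` nv"
  unfolding TX_V_def TX_A_def by auto

lemma EX_cases: "\<epsilon> \<in> EXt \<Longrightarrow> (\<exists>e\<in>sE. \<epsilon> = Inl ` e) \<or> (\<exists>v\<in>nv. \<epsilon> = {Inl v, Inr v})"
  unfolding TX_E_def by auto

lemma EX_Inl: "e \<in> sE \<Longrightarrow> Inl ` e \<in> EXt" unfolding TX_E_def by auto
lemma EX_N: "v \<in> nv \<Longrightarrow> {Inl v, Inr v} \<in> EXt" unfolding TX_E_def by auto

lemma finnv: "finite nv" using finS nv_sV finite_subset by blast

lemma TX_graph: "graph CXt EXt"
proof -
  have "finite CXt" unfolding CX_eq using finS finnv by simp
  moreover have "\<epsilon> \<subseteq> CXt \<and> card \<epsilon> = 2" if "\<epsilon> \<in> EXt" for \<epsilon>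
  using that
  proof -
  assume "\<epsilon> \<in> EXt"
  then show "\<epsilon> \<subseteq> CXt \<and> card \<epsilon> = 2"
  proof (cases rule: disjE[OF EX_cases])
    assume "\<exists>e\<in>sE. \<epsilon> = Inl ` e"
    then obtain e where e: "e \<in> sE" "\<epsilon> = Inl ` e" by blast
    have "e \<subseteq> S" "e \<in> E" using F7[OF e(1)] by auto
    moreover have "card (Inl ` e :: ('a + 'a) set) = card e" by (rule card_image) simp
    ultimately show ?thesis using e(2) edge[of e] unfolding CX_eq by auto
  next
    assume "\<exists>v\<in>nv. \<epsilon> = {Inl v, Inr v}"
    then obtain v where v: "v \<in> nv" "\<epsilon> = {Inl v, Inr v}" by blast
    then show ?thesis unfolding CX_eq using nv_sV by auto
  qed
  qed
  ultimately show ?thesis unfolding graph_def by blast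
qed

definition \<rho> :: "'a + 'a \<Rightarrow> 'a" where "\<rho> = case_sum id nb"

lemma nbC: "v \<in> nv \<Longrightarrow> nb v \<in> V \<union> A"
  using F8 edge by blast

lemma walk_Inl: "a \<in> S \<Longrightarrow> walk CXt EXt (map Inl (g a v0))"
proof -
  assume a: "a \<in> S"
  have aC: "a \<in> V \<union> A" using a SC by auto
  have v0S': "v0 \<in> S" using v0S by simp
  have "set (g a v0) \<subseteq> S" "set (el (g a v0)) \<subseteq> sE" using F4[OF a v0S'] by auto
  then show ?thesis unfolding walk_def el_map_img CX_eq using g_ne[OF aC v0C] EX_Inl by auto
qed

lemma map_Inl_path: "a \<in> S \<Longrightarrow> c \<in> S \<Longrightarrow> is_path CXt EXt (map Inl (g a c))"
proof -
  assume a: "a \<in> S" "c \<in> S"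
  have aC: "a \<in> V \<union> A" "c \<in> V \<union> A" using a SC by auto
  have "set (g a c) \<subseteq> S" "set (el (g a c)) \<subseteq> sE" using F4[OF a] by auto
  then have "walk CXt EXt (map Inl (g a c))"
    unfolding walk_def el_map_img CX_eq using g_ne[OF aC] EX_Inl by auto
  moreover have "distinct (map Inl (g a c))" using g_distinct[OF aC] by (simp add: distinct_map)
  ultimately show ?thesis by (rule distinct_walk_path)
qed

lemma TX_tree: "tree CXt EXt"
proof (rule tree_hom[OF TX_graph T, of \<rho> "Inl v0"])
  show "inj_on \<rho> CXt"
  proof (rule inj_onI)
    fix x y assume xy: "x \<in> CXt" "y \<in> CXt" "\<rho> x = \<rho> y"
    show "x = y"
    proof (cases x)
      case (Inl c)
      then have c: "c \<in> S" using xy(1) unfolding CX_eq by auto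
      show ?thesis
      proof (cases y)
        case (Inl c') then show ?thesis using xy(3) \<open>x = Inl c\<close> unfolding \<rho>_def by simp
      next
        case (Inr v) then have "v \<in> nv" using xy(2) unfolding CX_eq by auto
        then show ?thesis using F9 c xy(3) Inr \<open>x = Inl c\<close> unfolding \<rho>_def by auto
      qed
    next
      case (Inr v)
      then have v: "v \<in> nv" using xy(1) unfolding CX_eq by auto
      show ?thesis
      proof (cases y)
        case (Inl c') then have "c' \<in> S" using xy(2) unfolding CX_eq by auto
        then show ?thesis using F9 v xy(3) Inl \<open>x = Inr v\<close> unfolding \<rho>_def by auto
      next
        case (Inr v') then have "v' \<in> nv" using xy(2) unfolding CX_eq by auto
        then show ?thesis using F10 v xy(3) Inr \<open>x = Inr v\<close> unfolding \<rho>_def by auto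
      qed
    qed
  qed
  show "\<rho> ` CXt \<subseteq> V \<union> A"
  proof
    fix y assume "y \<in> \<rho> ` CXt"
    then obtain x where x: "x \<in> CXt" "y = \<rho> x" by blast
    show "y \<in> V \<union> A"
    proof (cases x)
      case (Inl c) then show ?thesis using x SC unfolding CX_eq \<rho>_def by auto
    next
      case (Inr v) then have "v \<in> nv" using x unfolding CX_eq by auto
      then show ?thesis using nbC x Inr unfolding \<rho>_def by simp
    qed
  qed
  show "\<forall>e\<in>EXt. \<rho> ` e \<in> E"
  proof
    fix \<epsilon> assume "\<epsilon> \<in> EXt"
    then show "\<rho> ` \<epsilon> \<in> E"
    proof (cases rule: disjE[OF EX_cases])
      assume "\<exists>e\<in>sE. \<epsilon> = Inl ` e"
      then obtain e where e: "e \<in> sE" "\<epsilon> = Inl ` e" by blast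
      have "\<rho> ` \<epsilon> = e" unfolding e(2) \<rho>_def by (simp add: image_image)
      then show ?thesis using F7[OF e(1)] by simp
    next
      assume "\<exists>v\<in>nv. \<epsilon> = {Inl v, Inr v}"
      then obtain v where v: "v \<in> nv" "\<epsilon> = {Inl v, Inr v}" by blast
      then show ?thesis using F8[OF v(1)] unfolding \<rho>_def by simp
    qed
  qed
  show "Inl v0 \<in> CXt" unfolding CX_eq using v0S by simp
  show "\<forall>x\<in>CXt. \<exists>w. walk CXt EXt w \<and> hd w = x \<and> last w = Inl v0"
  proof
    fix x assume "x \<in> CXt"
    then have "x \<in> Inl ` S \<union> Inr ` nv" unfolding CX_eq .
    then show "\<exists>w. walk CXt EXt w \<and> hd w = x \<and> last w = Inl v0"
    proof
      assume "x \<in> Inl ` S"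
      then obtain a where a: "a \<in> S" "x = Inl a" by blast
      have aC: "a \<in> V \<union> A" using a SC by auto
      have "hd (map Inl (g a v0)) = x" "last (map Inl (g a v0)) = (Inl v0 :: 'a + 'a)"
        using g_path[OF aC v0C] g_ne[OF aC v0C] a by (auto simp: hd_map last_map)
      then show ?thesis using walk_Inl[OF a(1)] by blast
    next
      assume "x \<in> Inr ` nv"
      then obtain v where v: "v \<in> nv" "x = Inr v" by blast
      have vS: "v \<in> S" and vC: "v \<in> V \<union> A" using v nv_sV SC by auto
      have w: "walk CXt EXt (map Inl (g v v0))" using walk_Inl[OF vS] .
      have ne: "map Inl (g v v0) \<noteq> []" "hd (map Inl (g v v0)) = Inl v"
        using g_path[OF vC v0C] g_ne[OF vC v0C] by (auto simp: hd_map)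
      have e1: "{Inr v, hd (map Inl (g v v0))} \<in> EXt" unfolding ne(2) using EX_N[OF v(1)]
        by (simp add: insert_commute)
      have "walk CXt EXt (Inr v # map Inl (g v v0))"
        using w e1 v unfolding walk_def el_Cons[OF ne(1)] CX_eq by auto
      moreover have "last (Inr v # map Inl (g v v0)) = Inl v0"
        using g_path[OF vC v0C] g_ne[OF vC v0C] by (auto simp: last_map)
      ultimately show ?thesis using v by (intro exI[of _ "Inr v # map Inl (g v v0)"]) simp
    qed
  qed
qed

lemma arr_sE: "\<alpha> \<in> X \<Longrightarrow> e \<in> E \<Longrightarrow> \<alpha> \<in> e \<Longrightarrow> e \<in> sE"
proof -
  assume a: "\<alpha> \<in> X" "e \<in> E" "\<alpha> \<in> e"
  have "\<alpha> \<noteq> v0" using a XA v0 disj by auto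
  then have "e \<in> set (el (g v0 \<alpha>))" using arr_in_path[of \<alpha> v0 e] a XA v0C by auto
  then show ?thesis unfolding subE_def pe_el using a(1) by auto
qed

lemma TX_gl: "gl (TX_V V A E v0 X) (TX_A V A E q v0 X) EXt"
proof (rule gl.intro)
  show "tr CXt EXt" using TX_tree by (rule tr.intro)
  show "gl_axioms (TX_V V A E v0 X) (TX_A V A E q v0 X) EXt"
  proof
    show "TX_V V A E v0 X \<inter> TX_A V A E q v0 X = {}"
      unfolding TX_V_def TX_A_def using sVV XA disj by auto
    show "\<forall>\<alpha>\<in>TX_A V A E q v0 X. valency EXt \<alpha> = 1"
    proof
      fix x assume "x \<in> TX_A V A E q v0 X"
      then show "valency EXt x = 1" unfolding TX_A_def
      proof
        assume "x \<in> Inl ` X"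
        then obtain \<alpha> where a: "\<alpha> \<in> X" "x = Inl \<alpha>" by blast
        obtain e0 where e0: "{e'\<in>E. \<alpha> \<in> e'} = {e0}" using arr_edge XA a(1) by blast
        have e0E: "e0 \<in> E" "\<alpha> \<in> e0" using e0 by auto
        have "{\<epsilon>\<in>EXt. x \<in> \<epsilon>} = {Inl ` e0}"
        proof (intro set_eqI iffI)
          fix \<epsilon> assume h: "\<epsilon> \<in> {\<epsilon>\<in>EXt. x \<in> \<epsilon>}"
          then show "\<epsilon> \<in> {Inl ` e0}"
          proof (cases rule: disjE[OF EX_cases])
            show "\<epsilon> \<in> EXt" using h by simp
            assume "\<exists>e\<in>sE. \<epsilon> = Inl ` e"
            then obtain e where e: "e \<in> sE" "\<epsilon> = Inl ` e" by blast
            then have "e \<in> E" "\<alpha> \<in> e" using F7 h a(2) by auto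
            then have "e \<in> {e'\<in>E. \<alpha> \<in> e'}" by simp
            then have "e = e0" unfolding e0 by simp
            then show ?thesis using e by simp
          next
            assume "\<exists>v\<in>nv. \<epsilon> = {Inl v, Inr v}"
            then obtain v where v: "v \<in> nv" "\<epsilon> = {Inl v, Inr v}" by blast
            then have "v = \<alpha>" using h a(2) by auto
            then have "\<alpha> \<in> V" "\<alpha> \<in> A" using v nv_sV sVV XA a(1) by auto
            then have False using disj by blast
            then show ?thesis by simp
          qed
        next
          fix \<epsilon> :: "('a + 'a) set" assume "\<epsilon> \<in> {Inl ` e0}"
          then show "\<epsilon> \<in> {\<epsilon>\<in>EXt. x \<in> \<epsilon>}" using EX_Inl arr_sE[OF a(1) e0E] a(2) e0E by auto
        qed
        then show ?thesis unfolding valency_def by simp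
      next
        assume "x \<in> Inr ` nv"
        then obtain v where v: "v \<in> nv" "x = Inr v" by blast
        have "{\<epsilon>\<in>EXt. x \<in> \<epsilon>} = {{Inl v, Inr v}}"
        proof (intro set_eqI iffI)
          fix \<epsilon> assume h: "\<epsilon> \<in> {\<epsilon>\<in>EXt. x \<in> \<epsilon>}"
          then show "\<epsilon> \<in> {{Inl v, Inr v}}"
          proof (cases rule: disjE[OF EX_cases])
            show "\<epsilon> \<in> EXt" using h by simp
            assume "\<exists>e\<in>sE. \<epsilon> = Inl ` e"
            then show ?thesis using h v by auto
          next
            assume "\<exists>v\<in>nv. \<epsilon> = {Inl v, Inr v}"
            then show ?thesis using h v by auto
          qed
        next
          fix \<epsilon> :: "('a + 'a) set" assume "\<epsilon> \<in> {{Inl v, Inr v}}"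
          then show "\<epsilon> \<in> {\<epsilon>\<in>EXt. x \<in> \<epsilon>}" using EX_N v by auto
        qed
        then show ?thesis unfolding valency_def by simp
      qed
    qed
  qed
qed

end


context mt begin

abbreviation "qX \<equiv> TX_q V A E q v0 X"

lemma gX_Inl: "a \<in> S \<Longrightarrow> c \<in> S \<Longrightarrow> gamma CXt EXt (Inl a) (Inl c) = map Inl (g a c)"
proof -
  assume a: "a \<in> S" "c \<in> S"
  have aC: "a \<in> V \<union> A" "c \<in> V \<union> A" using a SC by auto
  show ?thesis using tr.g_unique[OF tr.intro[OF TX_tree] map_Inl_path[OF a]]
    g_path[OF aC] g_ne[OF aC] by (simp add: hd_map last_map)
qed

lemma parX: "\<beta> \<in> X \<Longrightarrow> v \<in> S \<Longrightarrow> v \<noteq> \<beta> \<Longrightarrow> tr.par CXt EXt (Inl \<beta>) (Inl v) = Inl (par \<beta> v)"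
proof -
  assume a: "\<beta> \<in> X" "v \<in> S" "v \<noteq> \<beta>"
  have bS: "\<beta> \<in> S" using a by simp
  have C: "\<beta> \<in> V \<union> A" "v \<in> V \<union> A" using a SC by auto
  have g1: "g v \<beta> = v # g (par \<beta> v) \<beta>" using par1[OF C(1,2) a(3)] by simp
  have "g (par \<beta> v) \<beta> \<noteq> []" using g_ne par1[OF C(1,2) a(3)] C by blast
  then have "g v \<beta> ! 1 = par \<beta> v" using g1 g_path[of "par \<beta> v" \<beta>] par1[OF C(1,2) a(3)] C(1)
    by (cases "g (par \<beta> v) \<beta>") auto
  moreover have "1 < length (g v \<beta>)" using g1 \<open>g (par \<beta> v) \<beta> \<noteq> []\<close> by (cases "g (par \<beta> v) \<beta>") auto
  ultimately show ?thesis unfolding tr.par_def[OF tr.intro[OF TX_tree]] gX_Inl[OF a(2) bS] par_def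
    by simp
qed

lemma qX_Inl: "qX (Inl ` e) (Inl u) = q e u"
proof -
  have "(Inr u :: 'a + 'a) \<notin> Inl ` e" by auto
  moreover have "{z. (Inl z :: 'a + 'a) \<in> Inl ` e} = e" by auto
  ultimately show ?thesis by (simp only: TX_q_def sum.case if_False)
qed

lemma qX_N: "qX {Inl v, Inr v} (Inl v) = b v"
  unfolding TX_q_def by simp

lemma b_S: "u \<in> S \<Longrightarrow> (if u \<in> nv then b u else 1) = b u"
proof -
  assume u: "u \<in> S"
  show ?thesis
  proof (cases "u \<in> nv")
    case False
    show ?thesis
    proof (cases "u \<in> sV")
      case True then show ?thesis using False unfolding newv_def by auto
    next
      case F2: False
      then have uX: "u \<in> X" using u by simp
      have "{e\<in>E. u \<in> e \<and> e \<notin> sE} = {}" using arr_sE[OF uX] by blast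
      then show ?thesis using False unfolding bv_def by (simp only: prod.empty) simp
    qed
  qed simp
qed

lemma inj_imgInl: "inj_on (\<lambda>e. (Inl ` e :: ('a + 'a) set)) M"
  by (rule inj_onI) (auto simp: inj_image_eq_iff)

lemma Inl_edges_at: "{\<epsilon>\<in>EXt. Inl u \<in> \<epsilon>} = (\<lambda>e. Inl ` e) ` {e\<in>sE. u \<in> e} \<union> (if u \<in> nv then {{Inl u, Inr u}} else {})"
  unfolding TX_E_def by auto

lemma QpX: "set p \<subseteq> S \<Longrightarrow> set (el p) \<subseteq> sE \<Longrightarrow> u \<in> S \<Longrightarrow> Qpath EXt qX (map Inl p) (Inl u) = Qpath E q p u"
proof -
  assume p: "set p \<subseteq> S" "set (el p) \<subseteq> sE" and u: "u \<in> S"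
  have peI: "path_edges (map Inl p) = (\<lambda>e. Inl ` e) ` path_edges p" unfolding pe_el el_map_img by simp
  define M where "M = {e\<in>sE. u \<in> e \<and> e \<notin> path_edges p}"
  have setX: "{\<epsilon>\<in>EXt. Inl u \<in> \<epsilon> \<and> \<epsilon> \<notin> path_edges (map Inl p)} = (\<lambda>e. Inl ` e) ` M \<union> (if u \<in> nv then {{Inl u, Inr u}} else {})"
    unfolding peI M_def TX_E_def by (auto simp: inj_image_eq_iff)
  have finM: "finite M" unfolding M_def using finE F7 by (metis (no_types, lifting) finite_subset mem_Collect_eq subsetI)
  have disj': "(\<lambda>e. Inl ` e) ` M \<inter> (if u \<in> nv then {{Inl u, Inr u}} else {}) = {}" by auto
  have "Qpath EXt qX (map Inl p) (Inl u) = (\<Prod>\<epsilon>\<in>(\<lambda>e. Inl ` e) ` M \<union> (if u \<in> nv then {{Inl u, Inr u}} else {}). qX \<epsilon> (Inl u))"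
    by (simp only: Qpath_def setX)
  also have "\<dots> = (\<Prod>\<epsilon>\<in>(\<lambda>e. Inl ` e) ` M. qX \<epsilon> (Inl u)) * (\<Prod>\<epsilon>\<in>(if u \<in> nv then {{Inl u, Inr u}} else {}). qX \<epsilon> (Inl u))"
    using finM disj' by (intro prod.union_disjoint) auto
  also have "(\<Prod>\<epsilon>\<in>(\<lambda>e. Inl ` e) ` M. qX \<epsilon> (Inl u)) = (\<Prod>e\<in>M. q e u)"
    by (simp add: prod.reindex[OF inj_imgInl] qX_Inl)
  also have "(\<Prod>\<epsilon>\<in>(if u \<in> nv then {{Inl u, Inr u}} else {}). qX \<epsilon> (Inl u)) = b u"
    using b_S[OF u] qX_N by (cases "u \<in> nv") auto
  also have "(\<Prod>e\<in>M. q e u) * b u = Qpath E q p u"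
  proof -
    have "{e\<in>E. u \<in> e \<and> e \<notin> path_edges p} = M \<union> {e\<in>E. u \<in> e \<and> e \<notin> sE}"
      unfolding M_def using p(2) F7 unfolding pe_el by auto
    moreover have "M \<inter> {e\<in>E. u \<in> e \<and> e \<notin> sE} = {}" unfolding M_def by auto
    ultimately show ?thesis unfolding Qpath_def bv_def using finM finE
      by (simp add: prod.union_disjoint)
  qed
  finally show ?thesis .
qed

lemma QstarX: "a \<in> S \<Longrightarrow> c \<in> S \<Longrightarrow> Qstar EXt qX (gamma CXt EXt (Inl a) (Inl c)) = Qstar E q (g a c)"
proof -
  assume a: "a \<in> S" "c \<in> S"
  have F: "set (g a c) \<subseteq> S" "set (el (g a c)) \<subseteq> sE" using F4[OF a] by auto
  have pt: "Qpath EXt qX (map Inl (g a c)) (map Inl (g a c) ! i) = Qpath E q (g a c) (g a c ! i)"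
    if "i \<in> {1..<length (map Inl (g a c)) - 1}" for i
  proof -
    have "i < length (g a c)" using that by auto
    then have "g a c ! i \<in> S" using F by (meson nth_mem subsetD)
    then show ?thesis using QpX[OF F] \<open>i < length (g a c)\<close> by simp
  qed
  show ?thesis unfolding gX_Inl[OF a] Qstar_def
    by (rule prod.cong) (use pt in auto)
qed

end


context mt begin

definition S1 where "S1 \<beta> v = {e\<in>sE. v \<in> e} - {{v, par \<beta> v}}"

lemma finsE: "finite sE" using finE F7 by (meson finite_subset subsetI)

lemma S1_fin: "finite (S1 \<beta> v)" unfolding S1_def using finsE by simp

lemma GX:
  assumes \<beta>: "\<beta> \<in> X" and v: "v \<in> sV"
  shows "GG (gl.Sv (TX_V V A E v0 X) (TX_A V A E q v0 X) EXt (Inl \<beta>) (Inl v)) (\<lambda>\<epsilon>. qX \<epsilon> (Inl v))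
    = b v * GG (S1 \<beta> v) (\<lambda>e. q e v) + (b v - 1) * ((\<Prod>e\<in>S1 \<beta> v. q e v) - 1)"
proof -
  have vb: "v \<noteq> \<beta>" using \<beta> v XA sVV disj by auto
  have vS: "v \<in> S" using v by simp
  have sv: "gl.Sv (TX_V V A E v0 X) (TX_A V A E q v0 X) EXt (Inl \<beta>) (Inl v)
      = (\<lambda>e. Inl ` e) ` S1 \<beta> v \<union> (if v \<in> nv then {{Inl v, Inr v}} else {})"
  proof -
    have "gl.Sv (TX_V V A E v0 X) (TX_A V A E q v0 X) EXt (Inl \<beta>) (Inl v)
       = {\<epsilon>\<in>EXt. Inl v \<in> \<epsilon>} - {{Inl v, Inl (par \<beta> v)}}"
      unfolding gl.Sv_def[OF TX_gl] parX[OF \<beta> vS vb] by simp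
    also have "\<dots> = (\<lambda>e. Inl ` e) ` S1 \<beta> v \<union> (if v \<in> nv then {{Inl v, Inr v}} else {})"
      unfolding Inl_edges_at S1_def by (auto simp: inj_image_eq_iff)
    finally show ?thesis .
  qed
  have gimg: "GG ((\<lambda>e. Inl ` e) ` S1 \<beta> v) (\<lambda>\<epsilon>. qX \<epsilon> (Inl v)) = GG (S1 \<beta> v) (\<lambda>e. q e v)"
    unfolding GG_reindex[OF inj_imgInl] by (simp add: comp_def qX_Inl)
  have pimg: "(\<Prod>\<epsilon>\<in>(\<lambda>e. Inl ` e) ` S1 \<beta> v. qX \<epsilon> (Inl v)) = (\<Prod>e\<in>S1 \<beta> v. q e v)"
    by (simp add: prod.reindex[OF inj_imgInl] qX_Inl)
  show ?thesis
  proof (cases "v \<in> nv")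
    case True
    have "{Inl v, Inr v} \<notin> (\<lambda>e. Inl ` e) ` S1 \<beta> v" by auto
    then have "GG (insert {Inl v, Inr v} ((\<lambda>e. Inl ` e) ` S1 \<beta> v)) (\<lambda>\<epsilon>. qX \<epsilon> (Inl v))
      = qX {Inl v, Inr v} (Inl v) * GG ((\<lambda>e. Inl ` e) ` S1 \<beta> v) (\<lambda>\<epsilon>. qX \<epsilon> (Inl v))
        + (qX {Inl v, Inr v} (Inl v) - 1) * ((\<Prod>\<epsilon>\<in>(\<lambda>e. Inl ` e) ` S1 \<beta> v. qX \<epsilon> (Inl v)) - 1)"
      using S1_fin by (intro GG_insert) auto
    then show ?thesis unfolding sv using True gimg pimg qX_N by simp
  next
    case False
    then have "b v = 1" using v unfolding newv_def by auto
    then show ?thesis unfolding sv using False gimg by simp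
  qed
qed

lemma GT:
  assumes \<beta>: "\<beta> \<in> X" and v: "v \<in> sV"
  shows "GG (Sv \<beta> v) (\<lambda>e. q e v) = b v * GG (S1 \<beta> v) (\<lambda>e. q e v) + (b v - 1) * ((\<Prod>e\<in>S1 \<beta> v. q e v) - 1)"
proof -
  have vb: "v \<noteq> \<beta>" using \<beta> v XA sVV disj by auto
  have vS: "v \<in> S" and bS: "\<beta> \<in> S" using v \<beta> by auto
  have C: "\<beta> \<in> V \<union> A" "v \<in> V \<union> A" using vS bS SC by auto
  define S2 where "S2 = {e\<in>E. v \<in> e \<and> e \<notin> sE}"
  have pin: "{v, par \<beta> v} \<in> sE"
  proof -
    have "{v, par \<beta> v} \<in> {e \<in> set (el (g v \<beta>)). v \<in> e}" unfolding par4[OF C(1,2) vb] by simp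
    then show ?thesis using F4[OF vS bS] by auto
  qed
  have split: "Sv \<beta> v = S1 \<beta> v \<union> S2" unfolding Sv_def S1_def S2_def using pin F7 by auto
  have dj: "S1 \<beta> v \<inter> S2 = {}" unfolding S1_def S2_def by auto
  have finS2: "finite S2" unfolding S2_def using finE by simp
  have card: "card {s\<in>S2. q s v \<noteq> 1} \<le> 1"
  proof (cases "v = v0")
    case True
    then have e: "{s\<in>S2. q s v \<noteq> 1} = {}" unfolding S2_def using q0 by auto
    show ?thesis unfolding e by simp
  next
    case False
    have "{s\<in>S2. q s v \<noteq> 1} \<subseteq> {e\<in>E. v \<in> e \<and> e \<notin> path_edges (gamma (V \<union> A) E v0 v) \<and> q e v \<noteq> 1}"
      unfolding S2_def pe_el using F3[OF vS] by auto
    moreover have "finite {e\<in>E. v \<in> e \<and> e \<notin> path_edges (gamma (V \<union> A) E v0 v) \<and> q e v \<noteq> 1}"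
      using finE by simp
    moreover have "card {e\<in>E. v \<in> e \<and> e \<notin> path_edges (gamma (V \<union> A) E v0 v) \<and> q e v \<noteq> 1} \<le> 1"
      using pr False v sVV by blast
    ultimately show ?thesis using card_mono le_trans by blast
  qed
  have "(\<Prod>s\<in>S2. q s v) = b v" unfolding S2_def bv_def by simp
  then show ?thesis unfolding split using GG_merge[OF S1_fin finS2 dj card] by simp
qed

lemma G0:
  assumes \<beta>: "\<beta> \<in> X" and v: "v \<in> V" "v \<notin> sV"
  shows "GG (Sv \<beta> v) (\<lambda>e. q e v) = 0"
proof -
  have bC: "\<beta> \<in> V \<union> A" using \<beta> XA by auto
  have vC: "v \<in> V \<union> A" using v by simp
  have nin: "v \<notin> set (g v0 \<beta>)" using v \<beta> unfolding subV_def by auto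
  have vv0: "v \<noteq> v0" using v v0S by auto
  have vb: "v \<noteq> \<beta>" using nin g_path[OF v0C bC] g_ne[OF v0C bC] by (metis last_in_set)
  have pp: "par \<beta> v = par v0 v" using offpath[OF v0C bC vC nin] .
  have "Sv \<beta> v = Sv v0 v" unfolding Sv_def pp by simp
  also have "\<dots> = {\<epsilon>\<in>E. v \<in> \<epsilon> \<and> \<epsilon> \<notin> path_edges (g v v0)}" using Inc_v[OF v0C vC vv0] by simp
  also have "path_edges (g v v0) = path_edges (g v0 v)" unfolding pe_el g_rev[OF v0C vC] el_rev by simp
  finally have sv: "Sv \<beta> v = {\<epsilon>\<in>E. v \<in> \<epsilon> \<and> \<epsilon> \<notin> path_edges (g v0 v)}" .
  have card: "card {s\<in>Sv \<beta> v. q s v \<noteq> 1} \<le> 1"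
    using pr vv0 v unfolding sv by (simp add: conj_assoc)
  have "GG ({} \<union> Sv \<beta> v) (\<lambda>e. q e v) = 0"
    using GG_merge[of "{}" "Sv \<beta> v" "\<lambda>e. q e v"] card finSv by (simp add: GG_empty)
  then show ?thesis by simp
qed

end


context mt begin

lemma TX_B: "TX_A V A E q v0 X - A0 (TX_A V A E q v0 X) (TX_f f) = Inl ` X"
  using X unfolding TX_A_def A0_def TX_f_def by auto

lemma MX_formula:
  "MX V A E f q v0 X = (\<Sum>\<beta>\<in>X. f \<beta> - (\<Sum>\<alpha>\<in>X - {\<beta>}. f \<beta> * Qstar E q (g \<alpha> \<beta>))
      - (\<Sum>v\<in>V. f \<beta> * Qstar E q (g v \<beta>) * GG (Sv \<beta> v) (\<lambda>e. q e v)))"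
proof -
  interpret TX: gl "TX_V V A E v0 X" "TX_A V A E q v0 X" EXt by (rule TX_gl)
  have "MX V A E f q v0 X = MT (TX_V V A E v0 X) (TX_A V A E q v0 X) EXt (TX_f f) qX"
    unfolding MX_def by simp
  also have "\<dots> = (\<Sum>r\<in>Inl ` X. TX_f f r - (\<Sum>\<alpha>\<in>Inl ` X - {r}. TX_f f r * Qstar EXt qX (gamma CXt EXt \<alpha> r))
      - (\<Sum>v\<in>TX_V V A E v0 X. TX_f f r * Qstar EXt qX (gamma CXt EXt v r) * GG (TX.Sv r v) (\<lambda>e. qX e v)))"
    using TX.MT_formula[of "TX_f f" qX] unfolding TX_B by simp
  also have "\<dots> = (\<Sum>\<beta>\<in>X. f \<beta> - (\<Sum>\<alpha>\<in>X - {\<beta>}. f \<beta> * Qstar E q (g \<alpha> \<beta>))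
      - (\<Sum>v\<in>V. f \<beta> * Qstar E q (g v \<beta>) * GG (Sv \<beta> v) (\<lambda>e. q e v)))"
    unfolding sum.reindex[OF inj_Inl[THEN inj_on_subset, OF subset_UNIV]] comp_def
  proof (rule sum.cong[OF refl])
    fix \<beta> assume \<beta>: "\<beta> \<in> X"
    have bS: "\<beta> \<in> S" using \<beta> by simp
    have 1: "TX_f f (Inl \<beta>) = f \<beta>" unfolding TX_f_def by simp
    have 2: "(\<Sum>\<alpha>\<in>Inl ` X - {Inl \<beta>}. TX_f f (Inl \<beta>) * Qstar EXt qX (gamma CXt EXt \<alpha> (Inl \<beta>)))
        = (\<Sum>\<alpha>\<in>X - {\<beta>}. f \<beta> * Qstar E q (g \<alpha> \<beta>))"
    proof -
      have eqI: "Inl ` X - {Inl \<beta>} = Inl ` (X - {\<beta>})" by auto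
      have "(\<Sum>\<alpha>\<in>Inl ` X - {Inl \<beta>}. TX_f f (Inl \<beta>) * Qstar EXt qX (gamma CXt EXt \<alpha> (Inl \<beta>)))
          = (\<Sum>\<alpha>\<in>X - {\<beta>}. TX_f f (Inl \<beta>) * Qstar EXt qX (gamma CXt EXt (Inl \<alpha>) (Inl \<beta>)))"
        unfolding eqI by (simp add: sum.reindex)
      also have "\<dots> = (\<Sum>\<alpha>\<in>X - {\<beta>}. f \<beta> * Qstar E q (g \<alpha> \<beta>))"
        using QstarX[OF _ bS] 1 by (intro sum.cong) auto
      finally show ?thesis .
    qed
    have 3: "(\<Sum>v\<in>TX_V V A E v0 X. TX_f f (Inl \<beta>) * Qstar EXt qX (gamma CXt EXt v (Inl \<beta>)) * GG (TX.Sv (Inl \<beta>) v) (\<lambda>e. qX e v))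
        = (\<Sum>v\<in>V. f \<beta> * Qstar E q (g v \<beta>) * GG (Sv \<beta> v) (\<lambda>e. q e v))"
    proof -
      have "(\<Sum>v\<in>TX_V V A E v0 X. TX_f f (Inl \<beta>) * Qstar EXt qX (gamma CXt EXt v (Inl \<beta>)) * GG (TX.Sv (Inl \<beta>) v) (\<lambda>e. qX e v))
          = (\<Sum>v\<in>sV. TX_f f (Inl \<beta>) * Qstar EXt qX (gamma CXt EXt (Inl v) (Inl \<beta>)) * GG (TX.Sv (Inl \<beta>) (Inl v)) (\<lambda>e. qX e (Inl v)))"
        unfolding TX_V_def by (simp add: sum.reindex)
      also have "\<dots> = (\<Sum>v\<in>sV. f \<beta> * Qstar E q (g v \<beta>) * GG (Sv \<beta> v) (\<lambda>e. q e v))"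
      proof (rule sum.cong[OF refl])
        fix v assume v: "v \<in> sV"
        then have vS: "v \<in> S" by simp
        show "TX_f f (Inl \<beta>) * Qstar EXt qX (gamma CXt EXt (Inl v) (Inl \<beta>)) * GG (TX.Sv (Inl \<beta>) (Inl v)) (\<lambda>e. qX e (Inl v))
            = f \<beta> * Qstar E q (g v \<beta>) * GG (Sv \<beta> v) (\<lambda>e. q e v)"
          using QstarX[OF vS bS] GX[OF \<beta> v] GT[OF \<beta> v] 1 by simp
      qed
      also have "\<dots> = (\<Sum>v\<in>V. f \<beta> * Qstar E q (g v \<beta>) * GG (Sv \<beta> v) (\<lambda>e. q e v))"
      proof (rule sum.mono_neutral_left)
        show "finite V" using fin by simp
        show "sV \<subseteq> V" by (rule sVV)
        show "\<forall>i\<in>V - sV. f \<beta> * Qstar E q (g i \<beta>) * GG (Sv \<beta> i) (\<lambda>e. q e i) = 0"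
          using G0[OF \<beta>] by simp
      qed
      finally show ?thesis .
    qed
    show "TX_f f (Inl \<beta>) - (\<Sum>\<alpha>\<in>Inl ` X - {Inl \<beta>}. TX_f f (Inl \<beta>) * Qstar EXt qX (gamma CXt EXt \<alpha> (Inl \<beta>)))
        - (\<Sum>v\<in>TX_V V A E v0 X. TX_f f (Inl \<beta>) * Qstar EXt qX (gamma CXt EXt v (Inl \<beta>)) * GG (TX.Sv (Inl \<beta>) v) (\<lambda>e. qX e v))
      = f \<beta> - (\<Sum>\<alpha>\<in>X - {\<beta>}. f \<beta> * Qstar E q (g \<alpha> \<beta>)) - (\<Sum>v\<in>V. f \<beta> * Qstar E q (g v \<beta>) * GG (Sv \<beta> v) (\<lambda>e. q e v))"
      using 1 2 3 by simp
  qed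
  finally show ?thesis .
qed

end


lemma part_facts:
  assumes "partition_on B P" "finite B"
  shows "finite P" "\<And>X. X \<in> P \<Longrightarrow> X \<subseteq> B \<and> X \<noteq> {} \<and> finite X"
    "\<And>X Y x. X \<in> P \<Longrightarrow> Y \<in> P \<Longrightarrow> x \<in> X \<Longrightarrow> x \<in> Y \<Longrightarrow> X = Y"
    "\<Union>P = B"
proof -
  show "\<Union>P = B" using partition_onD1[OF assms(1)] by simp
  then have "P \<subseteq> Pow B" by auto
  then show "finite P" using assms(2) by (meson finite_Pow_iff finite_subset)
  show "\<And>X. X \<in> P \<Longrightarrow> X \<subseteq> B \<and> X \<noteq> {} \<and> finite X"
    using partition_onD1[OF assms(1)] partition_onD3[OF assms(1)] assms(2)
    by (metis Sup_upper finite_subset)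
  show "\<And>X Y x. X \<in> P \<Longrightarrow> Y \<in> P \<Longrightarrow> x \<in> X \<Longrightarrow> x \<in> Y \<Longrightarrow> X = Y"
    using partition_onD2[OF assms(1)] unfolding disjoint_def by blast
qed

lemma sum_part:
  assumes "partition_on B P" "finite B"
  shows "(\<Sum>X\<in>P. \<Sum>b\<in>X. h b) = (\<Sum>b\<in>B. h b)"
proof -
  note pf = part_facts[OF assms]
  have a1: "\<forall>X\<in>P. finite X" using pf(2) by blast
  have a2: "\<forall>X\<in>P. \<forall>Y\<in>P. X \<noteq> Y \<longrightarrow> X \<inter> Y = {}" using pf(3) by blast
  have "(\<Sum>b\<in>\<Union>P. h b) = (\<Sum>X\<in>P. \<Sum>b\<in>X. h b)"
    using sum.Union_disjoint[OF a1 a2, of h] by (simp add: comp_def)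
  then show ?thesis using pf(4) by simp
qed

definition same where "same P a b \<longleftrightarrow> (\<exists>X\<in>P. a \<in> X \<and> b \<in> X)"

lemma part_sum:
  assumes "partition_on B P" "finite B"
  shows "(\<Sum>X\<in>P. \<Sum>b\<in>X. \<Sum>a\<in>B - X. H a b) = (\<Sum>b\<in>B. \<Sum>a\<in>B. if same P a b then 0 else H a b)"
proof -
  note pf = part_facts[OF assms]
  have inner: "(\<Sum>a\<in>B - X. H a b) = (\<Sum>a\<in>B. if same P a b then 0 else H a b)" if X: "X \<in> P" "b \<in> X" for X b
  proof -
    have "B - X = {a\<in>B. \<not> same P a b}" unfolding same_def using X pf(2,3) by blast
    moreover have "(\<Sum>a\<in>{a\<in>B. \<not> same P a b}. H a b) = (\<Sum>a\<in>B. if \<not> same P a b then H a b else 0)"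
      using assms(2) by (rule sum.inter_filter)
    moreover have "(\<Sum>a\<in>B. if \<not> same P a b then H a b else 0) = (\<Sum>a\<in>B. if same P a b then 0 else H a b)"
      by (rule sum.cong) auto
    ultimately show ?thesis by simp
  qed
  have "(\<Sum>X\<in>P. \<Sum>b\<in>X. \<Sum>a\<in>B - X. H a b) = (\<Sum>X\<in>P. \<Sum>b\<in>X. \<Sum>a\<in>B. if same P a b then 0 else H a b)"
    by (rule sum.cong[OF refl], rule sum.cong[OF refl], rule inner)
  also have "\<dots> = (\<Sum>b\<in>B. \<Sum>a\<in>B. if same P a b then 0 else H a b)" by (rule sum_part[OF assms])
  finally show ?thesis .
qed

context gl begin

lemma MX_eq:
  assumes v0: "v0 \<in> V" and q0: "\<forall>e\<in>E. v0 \<in> e \<longrightarrow> q e v0 = 1"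
    and pr: "\<forall>v\<in>V - {v0}. card {e\<in>E. v \<in> e \<and> e \<notin> path_edges (gamma (V \<union> A) E v0 v) \<and> q e v \<noteq> 1} \<le> 1"
    and X: "X \<subseteq> A - A0 A f" "X \<noteq> {}"
  shows "MX V A E f q v0 X = (\<Sum>\<beta>\<in>X. f \<beta> - (\<Sum>\<alpha>\<in>X - {\<beta>}. f \<beta> * Qstar E q (g \<alpha> \<beta>))
      - (\<Sum>v\<in>V. f \<beta> * Qstar E q (g v \<beta>) * GG (Sv \<beta> v) (\<lambda>e. q e v)))"
proof -
  interpret mt V A E f q v0 X by unfold_locales (use assms in auto)
  show ?thesis by (rule MX_formula)
qed

lemma CORE:
  assumes v0: "v0 \<in> V" and q0: "\<forall>e\<in>E. v0 \<in> e \<longrightarrow> q e v0 = 1"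
    and pr: "\<forall>v\<in>V - {v0}. card {e\<in>E. v \<in> e \<and> e \<notin> path_edges (gamma (V \<union> A) E v0 v) \<and> q e v \<noteq> 1} \<le> 1"
    and P: "partition_on (A - A0 A f) P"
  shows "real_of_int (MT V A E f q) = (\<Sum>X\<in>P. real_of_int (MX V A E f q v0 X)) + (\<Sum>X\<in>P. frakM V A E f q X)
     - real_of_int (\<Sum>X\<in>P. \<Sum>\<alpha>\<in>X. \<Sum>\<beta>\<in>(A - A0 A f) - X. Qstar E q (g \<alpha> \<beta>) * f \<alpha> * f \<beta>)"
proof -
  define B where "B = A - A0 A f"
  have finB: "finite B" unfolding B_def using fin by (meson finite_Diff finite_Un)
  note pf = part_facts[OF P[folded B_def] finB]
  define Q where "Q a c = Qstar E q (g a c)" for a c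
  define J where "J \<beta> = (\<Sum>v\<in>V. f \<beta> * Qstar E q (g v \<beta>) * GG (Sv \<beta> v) (\<lambda>e. q e v))" for \<beta>
  have fnz: "f a \<noteq> 0" if "a \<in> B" for a using that unfolding B_def A0_def by auto
  have MTf: "MT V A E f q = (\<Sum>X\<in>P. \<Sum>\<beta>\<in>X. f \<beta> - (\<Sum>\<alpha>\<in>B - {\<beta>}. f \<beta> * Q \<alpha> \<beta>) - J \<beta>)"
    unfolding MT_formula sum_part[OF P[folded B_def] finB] B_def Q_def J_def by simp
  have MXf: "MX V A E f q v0 X = (\<Sum>\<beta>\<in>X. f \<beta> - (\<Sum>\<alpha>\<in>X - {\<beta>}. f \<beta> * Q \<alpha> \<beta>) - J \<beta>)" if "X \<in> P" for X
    using MX_eq[OF v0 q0 pr, of X] pf(2)[OF that] unfolding B_def Q_def J_def by simp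
  have split: "(\<Sum>\<alpha>\<in>B - {\<beta>}. f \<beta> * Q \<alpha> \<beta>) = (\<Sum>\<alpha>\<in>X - {\<beta>}. f \<beta> * Q \<alpha> \<beta>) + (\<Sum>\<alpha>\<in>B - X. f \<beta> * Q \<alpha> \<beta>)"
    if "X \<in> P" "\<beta> \<in> X" for X \<beta>
  proof -
    have "B - {\<beta>} = (X - {\<beta>}) \<union> (B - X)" using pf(2)[OF that(1)] that(2) by auto
    moreover have "finite (X - {\<beta>})" "finite (B - X)" using pf(2)[OF that(1)] finB by auto
    ultimately show ?thesis by (simp add: sum.union_disjoint Diff_Int_distrib2 Int_Diff Diff_disjoint)
  qed
  have E1: "MT V A E f q - (\<Sum>X\<in>P. MX V A E f q v0 X) = - (\<Sum>X\<in>P. \<Sum>\<beta>\<in>X. \<Sum>\<alpha>\<in>B - X. f \<beta> * Q \<alpha> \<beta>)"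
  proof -
    have "MT V A E f q - (\<Sum>X\<in>P. MX V A E f q v0 X) = (\<Sum>X\<in>P. (\<Sum>\<beta>\<in>X. f \<beta> - (\<Sum>\<alpha>\<in>B - {\<beta>}. f \<beta> * Q \<alpha> \<beta>) - J \<beta>)
        - (\<Sum>\<beta>\<in>X. f \<beta> - (\<Sum>\<alpha>\<in>X - {\<beta>}. f \<beta> * Q \<alpha> \<beta>) - J \<beta>))"
      unfolding MTf using MXf by (simp add: sum_subtractf)
    also have "\<dots> = (\<Sum>X\<in>P. - (\<Sum>\<beta>\<in>X. \<Sum>\<alpha>\<in>B - X. f \<beta> * Q \<alpha> \<beta>))"
    proof (rule sum.cong[OF refl])
      fix X assume X: "X \<in> P"
      have "(\<Sum>\<beta>\<in>X. f \<beta> - (\<Sum>\<alpha>\<in>B - {\<beta>}. f \<beta> * Q \<alpha> \<beta>) - J \<beta>) - (\<Sum>\<beta>\<in>X. f \<beta> - (\<Sum>\<alpha>\<in>X - {\<beta>}. f \<beta> * Q \<alpha> \<beta>) - J \<beta>)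
          = (\<Sum>\<beta>\<in>X. (f \<beta> - (\<Sum>\<alpha>\<in>B - {\<beta>}. f \<beta> * Q \<alpha> \<beta>) - J \<beta>) - (f \<beta> - (\<Sum>\<alpha>\<in>X - {\<beta>}. f \<beta> * Q \<alpha> \<beta>) - J \<beta>))"
        by (rule sum_subtractf[symmetric])
      also have "\<dots> = (\<Sum>\<beta>\<in>X. - (\<Sum>\<alpha>\<in>B - X. f \<beta> * Q \<alpha> \<beta>))"
        by (rule sum.cong[OF refl]) (use split[OF X] in simp)
      finally show "(\<Sum>\<beta>\<in>X. f \<beta> - (\<Sum>\<alpha>\<in>B - {\<beta>}. f \<beta> * Q \<alpha> \<beta>) - J \<beta>) - (\<Sum>\<beta>\<in>X. f \<beta> - (\<Sum>\<alpha>\<in>X - {\<beta>}. f \<beta> * Q \<alpha> \<beta>) - J \<beta>)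
          = - (\<Sum>\<beta>\<in>X. \<Sum>\<alpha>\<in>B - X. f \<beta> * Q \<alpha> \<beta>)" by (simp add: sum_negf)
    qed
    finally show ?thesis by (simp add: sum_negf)
  qed
  have frak: "frakM V A E f q X = real_of_int (\<Sum>\<alpha>\<in>X. \<Sum>\<beta>\<in>B - X. (f \<alpha> - 1) * Q \<alpha> \<beta> * f \<beta>)" if X: "X \<in> P" for X
  proof -
    have "frakM V A E f q X = (\<Sum>\<alpha>\<in>X. (1 - 1 / real_of_int (f \<alpha>)) * real_of_int (\<Sum>\<beta>\<in>B - X. Q \<alpha> \<beta> * f \<alpha> * f \<beta>))"
      unfolding frakM_def B_def[symmetric]
    proof (rule sum.cong[OF refl])
      fix \<alpha> assume a: "\<alpha> \<in> X"
      have "{(a, c) \<in> {\<alpha>} \<times> (B - X). a \<noteq> c} = (\<lambda>c. (\<alpha>, c)) ` (B - X)" using a by auto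
      then have "II V A E f q {\<alpha>} (B - X) = (\<Sum>\<beta>\<in>B - X. Q \<alpha> \<beta> * f \<alpha> * f \<beta>)"
        unfolding II_def Q_def by (simp add: sum.reindex inj_on_def)
      then show "(1 - 1 / real_of_int (f \<alpha>)) * real_of_int (II V A E f q {\<alpha>} (B - X))
          = (1 - 1 / real_of_int (f \<alpha>)) * real_of_int (\<Sum>\<beta>\<in>B - X. Q \<alpha> \<beta> * f \<alpha> * f \<beta>)" by simp
    qed
    also have "\<dots> = real_of_int (\<Sum>\<alpha>\<in>X. \<Sum>\<beta>\<in>B - X. (f \<alpha> - 1) * Q \<alpha> \<beta> * f \<beta>)"
      unfolding of_int_sum
    proof (rule sum.cong[OF refl])
      fix \<alpha> assume a: "\<alpha> \<in> X"
      have nz: "real_of_int (f \<alpha>) \<noteq> 0" using fnz pf(2)[OF X] a by auto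
      show "(1 - 1 / real_of_int (f \<alpha>)) * (\<Sum>\<beta>\<in>B - X. real_of_int (Q \<alpha> \<beta> * f \<alpha> * f \<beta>))
          = (\<Sum>\<beta>\<in>B - X. real_of_int ((f \<alpha> - 1) * Q \<alpha> \<beta> * f \<beta>))"
        unfolding sum_distrib_left
        by (rule sum.cong[OF refl]) (use nz in \<open>simp add: field_simps\<close>)
    qed
    finally show ?thesis .
  qed
  have E2: "(\<Sum>X\<in>P. \<Sum>\<alpha>\<in>X. \<Sum>\<beta>\<in>B - X. (f \<alpha> - 1) * Q \<alpha> \<beta> * f \<beta>)
      - (\<Sum>X\<in>P. \<Sum>\<alpha>\<in>X. \<Sum>\<beta>\<in>B - X. Q \<alpha> \<beta> * f \<alpha> * f \<beta>)
      = - (\<Sum>X\<in>P. \<Sum>\<alpha>\<in>X. \<Sum>\<beta>\<in>B - X. Q \<alpha> \<beta> * f \<beta>)"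
  proof -
    have "(\<Sum>X\<in>P. \<Sum>\<alpha>\<in>X. \<Sum>\<beta>\<in>B - X. (f \<alpha> - 1) * Q \<alpha> \<beta> * f \<beta>)
      - (\<Sum>X\<in>P. \<Sum>\<alpha>\<in>X. \<Sum>\<beta>\<in>B - X. Q \<alpha> \<beta> * f \<alpha> * f \<beta>)
      = (\<Sum>X\<in>P. \<Sum>\<alpha>\<in>X. \<Sum>\<beta>\<in>B - X. (f \<alpha> - 1) * Q \<alpha> \<beta> * f \<beta> - Q \<alpha> \<beta> * f \<alpha> * f \<beta>)"
      by (simp only: sum_subtractf)
    also have "\<dots> = (\<Sum>X\<in>P. \<Sum>\<alpha>\<in>X. \<Sum>\<beta>\<in>B - X. - (Q \<alpha> \<beta> * f \<beta>))"
      by (simp add: algebra_simps)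
    also have "\<dots> = - (\<Sum>X\<in>P. \<Sum>\<alpha>\<in>X. \<Sum>\<beta>\<in>B - X. Q \<alpha> \<beta> * f \<beta>)"
      by (simp only: sum_negf)
    finally show ?thesis .
  qed
  have sym: "(\<Sum>X\<in>P. \<Sum>\<beta>\<in>X. \<Sum>\<alpha>\<in>B - X. f \<beta> * Q \<alpha> \<beta>) = (\<Sum>X\<in>P. \<Sum>\<alpha>\<in>X. \<Sum>\<beta>\<in>B - X. Q \<alpha> \<beta> * f \<beta>)"
  proof -
    have "(\<Sum>X\<in>P. \<Sum>\<beta>\<in>X. \<Sum>\<alpha>\<in>B - X. f \<beta> * Q \<alpha> \<beta>) = (\<Sum>b\<in>B. \<Sum>a\<in>B. if same P a b then 0 else f b * Q a b)"
      by (rule part_sum[OF P[folded B_def] finB])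
    also have "\<dots> = (\<Sum>a\<in>B. \<Sum>b\<in>B. if same P a b then 0 else f b * Q a b)" by (rule sum.swap)
    also have "\<dots> = (\<Sum>a\<in>B. \<Sum>b\<in>B. if same P b a then 0 else Q a b * f b)"
      unfolding same_def by (intro sum.cong refl) (auto simp: mult.commute)
    also have "\<dots> = (\<Sum>X\<in>P. \<Sum>\<alpha>\<in>X. \<Sum>\<beta>\<in>B - X. Q \<alpha> \<beta> * f \<beta>)"
      by (rule part_sum[OF P[folded B_def] finB, symmetric])
    finally show ?thesis .
  qed
  have "real_of_int (MT V A E f q) - (\<Sum>X\<in>P. real_of_int (MX V A E f q v0 X))
      = (\<Sum>X\<in>P. frakM V A E f q X) - real_of_int (\<Sum>X\<in>P. \<Sum>\<alpha>\<in>X. \<Sum>\<beta>\<in>B - X. Q \<alpha> \<beta> * f \<alpha> * f \<beta>)"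
  proof -
    have "(\<Sum>X\<in>P. frakM V A E f q X) = real_of_int (\<Sum>X\<in>P. \<Sum>\<alpha>\<in>X. \<Sum>\<beta>\<in>B - X. (f \<alpha> - 1) * Q \<alpha> \<beta> * f \<beta>)"
      using frak by (simp add: of_int_sum)
    then have "(\<Sum>X\<in>P. frakM V A E f q X) - real_of_int (\<Sum>X\<in>P. \<Sum>\<alpha>\<in>X. \<Sum>\<beta>\<in>B - X. Q \<alpha> \<beta> * f \<alpha> * f \<beta>)
        = real_of_int (\<Sum>X\<in>P. \<Sum>\<alpha>\<in>X. \<Sum>\<beta>\<in>B - X. (f \<alpha> - 1) * Q \<alpha> \<beta> * f \<beta>) - real_of_int (\<Sum>X\<in>P. \<Sum>\<alpha>\<in>X. \<Sum>\<beta>\<in>B - X. Q \<alpha> \<beta> * f \<alpha> * f \<beta>)"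
      by simp
    also have "\<dots> = real_of_int ((\<Sum>X\<in>P. \<Sum>\<alpha>\<in>X. \<Sum>\<beta>\<in>B - X. (f \<alpha> - 1) * Q \<alpha> \<beta> * f \<beta>) - (\<Sum>X\<in>P. \<Sum>\<alpha>\<in>X. \<Sum>\<beta>\<in>B - X. Q \<alpha> \<beta> * f \<alpha> * f \<beta>))"
      by (rule of_int_diff[symmetric])
    also have "\<dots> = real_of_int (- (\<Sum>X\<in>P. \<Sum>\<alpha>\<in>X. \<Sum>\<beta>\<in>B - X. Q \<alpha> \<beta> * f \<beta>))"
      by (simp only: E2)
    finally have "(\<Sum>X\<in>P. frakM V A E f q X) - real_of_int (\<Sum>X\<in>P. \<Sum>\<alpha>\<in>X. \<Sum>\<beta>\<in>B - X. Q \<alpha> \<beta> * f \<alpha> * f \<beta>)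
        = real_of_int (- (\<Sum>X\<in>P. \<Sum>\<alpha>\<in>X. \<Sum>\<beta>\<in>B - X. Q \<alpha> \<beta> * f \<beta>))" .
    moreover have "real_of_int (MT V A E f q) - (\<Sum>X\<in>P. real_of_int (MX V A E f q v0 X))
        = real_of_int (- (\<Sum>X\<in>P. \<Sum>\<beta>\<in>X. \<Sum>\<alpha>\<in>B - X. f \<beta> * Q \<alpha> \<beta>))"
      unfolding of_int_sum[symmetric] of_int_diff[symmetric] E1 ..
    ultimately show ?thesis using sym by simp
  qed
  then show ?thesis unfolding B_def Q_def by simp
qed

end


lemma II_sigma: "finite X \<Longrightarrow> finite Y \<Longrightarrow>
  II V A E f q X Y = (\<Sum>a\<in>X. \<Sum>c\<in>Y - {a}. Qstar E q (gamma (V \<union> A) E a c) * f a * f c)"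
proof -
  assume fin: "finite X" "finite Y"
  have "{(\<alpha>, \<beta>) \<in> X \<times> Y. \<alpha> \<noteq> \<beta>} = Sigma X (\<lambda>a. Y - {a})" by auto
  then show ?thesis unfolding II_def using fin by (simp add: sum.Sigma split_def)
qed

theorem theorem4p16:
  fixes V A :: "'a set" and E :: "'a set set" and f :: "'a \<Rightarrow> int"
    and q :: "'a set \<Rightarrow> 'a \<Rightarrow> int" and v0 :: 'a and P :: "'a set set"
  assumes "dptree V A E f q v0"
    and "partition_on (A - A0 A f) P"
  shows "(real_of_int (MT V A E f q) =
           (\<Sum>\<alpha>\<in>A - A0 A f. real_of_int (MX V A E f q v0 {\<alpha>}))
         + (\<Sum>\<alpha>\<in>A - A0 A f. frakM V A E f q {\<alpha>})
         - real_of_int (II V A E f q (A - A0 A f) (A - A0 A f)))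
       \<and> (real_of_int (MT V A E f q) =
           (\<Sum>X\<in>P. real_of_int (MX V A E f q v0 X))
         + (\<Sum>X\<in>P. frakM V A E f q X)
         - real_of_int (\<Sum>p\<in>{(X, Y) \<in> P \<times> P. X \<noteq> Y}. II V A E f q (fst p) (snd p)))"
proof -
  have dt: "dtree V A E f q" and ps: "pseudo_root V A E q v0" using assms(1) unfolding dptree_def by auto
  have G: "gl V A E"
  proof (rule gl.intro)
    show "tr (V \<union> A) E" using dt unfolding dtree_def by (intro tr.intro) simp
    show "gl_axioms V A E" using dt unfolding dtree_def by (intro gl_axioms.intro) auto
  qed
  interpret gl V A E by (rule G)
  have v0: "v0 \<in> V" and q0: "\<forall>e\<in>E. v0 \<in> e \<longrightarrow> q e v0 = 1"
    and pr: "\<forall>v\<in>V - {v0}. card {e\<in>E. v \<in> e \<and> e \<notin> path_edges (gamma (V \<union> A) E v0 v) \<and> q e v \<noteq> 1} \<le> 1"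
    using ps unfolding pseudo_root_def by auto
  define B where "B = A - A0 A f"
  have finB: "finite B" unfolding B_def using fin by (meson finite_Diff finite_Un)
  define Q where "Q a c = Qstar E q (gamma (V \<union> A) E a c)" for a c
  have pairs: "(\<Sum>p\<in>{(X, Y) \<in> P' \<times> P'. X \<noteq> Y}. II V A E f q (fst p) (snd p))
      = (\<Sum>X\<in>P'. \<Sum>\<alpha>\<in>X. \<Sum>\<beta>\<in>B - X. Q \<alpha> \<beta> * f \<alpha> * f \<beta>)" if P': "partition_on B P'" for P'
  proof -
    note pf = part_facts[OF P' finB]
    have "{(X, Y) \<in> P' \<times> P'. X \<noteq> Y} = Sigma P' (\<lambda>X. P' - {X})" by auto
    then have "(\<Sum>p\<in>{(X, Y) \<in> P' \<times> P'. X \<noteq> Y}. II V A E f q (fst p) (snd p))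
        = (\<Sum>X\<in>P'. \<Sum>Y\<in>P' - {X}. II V A E f q X Y)"
      using pf(1) by (simp add: sum.Sigma split_def)
    also have "\<dots> = (\<Sum>X\<in>P'. \<Sum>\<alpha>\<in>X. \<Sum>\<beta>\<in>B - X. Q \<alpha> \<beta> * f \<alpha> * f \<beta>)"
    proof (rule sum.cong[OF refl])
      fix X assume X: "X \<in> P'"
      have "(\<Sum>Y\<in>P' - {X}. II V A E f q X Y) = (\<Sum>Y\<in>P' - {X}. \<Sum>\<alpha>\<in>X. \<Sum>\<beta>\<in>Y. Q \<alpha> \<beta> * f \<alpha> * f \<beta>)"
      proof (rule sum.cong[OF refl])
        fix Y assume Y: "Y \<in> P' - {X}"
        have "II V A E f q X Y = (\<Sum>a\<in>X. \<Sum>c\<in>Y - {a}. Q a c * f a * f c)"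
          unfolding Q_def using pf(2) X Y by (intro II_sigma) auto
        also have "\<dots> = (\<Sum>\<alpha>\<in>X. \<Sum>\<beta>\<in>Y. Q \<alpha> \<beta> * f \<alpha> * f \<beta>)"
        proof (rule sum.cong[OF refl])
          fix a assume "a \<in> X"
          then have "a \<notin> Y" using pf(3) X Y by blast
          then show "(\<Sum>c\<in>Y - {a}. Q a c * f a * f c) = (\<Sum>\<beta>\<in>Y. Q a \<beta> * f a * f \<beta>)" by simp
        qed
        finally show "II V A E f q X Y = (\<Sum>\<alpha>\<in>X. \<Sum>\<beta>\<in>Y. Q \<alpha> \<beta> * f \<alpha> * f \<beta>)" .
      qed
      also have "\<dots> = (\<Sum>\<alpha>\<in>X. \<Sum>Y\<in>P' - {X}. \<Sum>\<beta>\<in>Y. Q \<alpha> \<beta> * f \<alpha> * f \<beta>)" by (rule sum.swap)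
      also have "\<dots> = (\<Sum>\<alpha>\<in>X. \<Sum>\<beta>\<in>B - X. Q \<alpha> \<beta> * f \<alpha> * f \<beta>)"
      proof (rule sum.cong[OF refl])
        fix a
        have a1: "\<forall>Y\<in>P' - {X}. finite Y" using pf(2) by blast
        have a2: "\<forall>Y\<in>P' - {X}. \<forall>Z\<in>P' - {X}. Y \<noteq> Z \<longrightarrow> Y \<inter> Z = {}" using pf(3) by blast
        have "\<Union>(P' - {X}) = B - X" using pf(2,3,4) X by blast
        then show "(\<Sum>Y\<in>P' - {X}. \<Sum>\<beta>\<in>Y. Q a \<beta> * f a * f \<beta>) = (\<Sum>\<beta>\<in>B - X. Q a \<beta> * f a * f \<beta>)"
          using sum.Union_disjoint[OF a1 a2, of "\<lambda>\<beta>. Q a \<beta> * f a * f \<beta>"] by (simp add: comp_def)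
      qed
      finally show "(\<Sum>Y\<in>P' - {X}. II V A E f q X Y) = (\<Sum>\<alpha>\<in>X. \<Sum>\<beta>\<in>B - X. Q \<alpha> \<beta> * f \<alpha> * f \<beta>)" .
    qed
    finally show ?thesis .
  qed
  have core: "real_of_int (MT V A E f q) = (\<Sum>X\<in>P'. real_of_int (MX V A E f q v0 X)) + (\<Sum>X\<in>P'. frakM V A E f q X)
     - real_of_int (\<Sum>X\<in>P'. \<Sum>\<alpha>\<in>X. \<Sum>\<beta>\<in>B - X. Q \<alpha> \<beta> * f \<alpha> * f \<beta>)" if P': "partition_on B P'" for P'
    using CORE[OF v0 q0 pr, of f P'] P' unfolding B_def Q_def by simp
  have b: "real_of_int (MT V A E f q) =
           (\<Sum>X\<in>P. real_of_int (MX V A E f q v0 X))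
         + (\<Sum>X\<in>P. frakM V A E f q X)
         - real_of_int (\<Sum>p\<in>{(X, Y) \<in> P \<times> P. X \<noteq> Y}. II V A E f q (fst p) (snd p))"
    using core[of P] pairs[of P] assms(2) unfolding B_def by simp
  have a: "real_of_int (MT V A E f q) =
           (\<Sum>\<alpha>\<in>B. real_of_int (MX V A E f q v0 {\<alpha>}))
         + (\<Sum>\<alpha>\<in>B. frakM V A E f q {\<alpha>})
         - real_of_int (II V A E f q B B)"
  proof -
    define P1 where "P1 = (\<lambda>x. {x}) ` B"
    have P1: "partition_on B P1" unfolding P1_def by (rule partition_on_singletons)
    have inj: "inj_on (\<lambda>x. {x}) B" by (rule inj_onI) simp
    have 1: "(\<Sum>X\<in>P1. real_of_int (MX V A E f q v0 X)) = (\<Sum>\<alpha>\<in>B. real_of_int (MX V A E f q v0 {\<alpha>}))"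
      unfolding P1_def by (simp add: sum.reindex[OF inj])
    have 2: "(\<Sum>X\<in>P1. frakM V A E f q X) = (\<Sum>\<alpha>\<in>B. frakM V A E f q {\<alpha>})"
      unfolding P1_def by (simp add: sum.reindex[OF inj])
    have 3: "(\<Sum>X\<in>P1. \<Sum>\<alpha>\<in>X. \<Sum>\<beta>\<in>B - X. Q \<alpha> \<beta> * f \<alpha> * f \<beta>) = II V A E f q B B"
      unfolding P1_def II_sigma[OF finB finB] Q_def by (simp add: sum.reindex[OF inj])
    show ?thesis using core[OF P1] 1 2 3 by simp
  qed
  show ?thesis using a b unfolding B_def by simp
qed


end
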